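(* Let $G=(V,E)$ be a finite graph with maximum degree $\Delta$, let $q\in\mathbb N$ and $\beta\ge 0$. Let $P_{\rm SW}$ and $P_{\rm HB}$ be the transition matrices of the Swendsen--Wang dynamics and the heat-bath dynamics, respectively, for the $q$-state Potts model on $G$ at inverse temperature $\beta$. Then \[ \lambda(P_{\rm SW})\;\ge\; c_{\rm SW}\,\lambda(P_{\rm HB}),\qquad\text{where } c_{\rm SW}=c_{\rm SW}(\Delta,\beta,q):=q^{-1}\bigl(q\,e^{2\beta}\bigr)^{-2\Delta}. \]
   Context: Graphs are finite; parallel edges and loops are allowed; each edge $e$ has a set $\{e^{(1)},e^{(2)}\}$ of one or two endvertices. $\deg_G(v)$ is the number of edges having $v$ as an endvertex, and $\Delta=\max_v\deg_G(v)$. For $A\subseteq E$, $c(A)$ is the number of connected components of the spanning subgraph $(V,A)$. Potts model: $\Omega_{\rm P}=\{1,\dots,q\}^V$, $E(\sigma)=\{e\in E:\sigma(e^{(1)})=\sigma(e^{(2)})\}$, and $\pi(\sigma)=e^{\beta|E(\sigma)|}/Z$ with $Z$ the normalizing constant. Heat-bath dynamics: for $\sigma\in\Omega_{\rm P}$, $v\in V$, $k\in\{1,\dots,q\}$ let $\sigma^{v,k}$ agree with $\sigma$ off $v$ and equal $k$ at $v$, and $\Omega_{\sigma,v}=\{\sigma^{v,l}:l=1,\dots,q\}$. Then $P_{\rm HB}(\sigma,\tau)=\frac1{|V|}\sum_{v\in V}\frac{\pi(\tau)}{\sum_{l=1}^q\pi(\sigma^{v,l})}\mathbf 1(\tau\in\Omega_{\sigma,v})$.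 Swendsen--Wang dynamics: with $p=1-e^{-\beta}$, $P_{\rm SW}(\sigma,\tau)=(1-p)^{|E(\sigma)|}\sum_{A\subseteq E(\sigma)\cap E(\tau)}\bigl(\tfrac{p}{1-p}\bigr)^{|A|}q^{-c(A)}$ (from $\sigma$, keep each edge of $E(\sigma)$ independently with probability $p$ to obtain $A$, then give each connected component of $(V,A)$ an independent uniformly random color). Both chains are ergodic and reversible with respect to $\pi$. For such a transition matrix $P$, the spectral gap is $\lambda(P)=1-\max\{|\xi|:\xi\text{ an eigenvalue of }P,\ \xi\neq1\}$. *)

theory Defs
  imports "HOL-Analysis.Analysis"
begin

text \<open>A finite multigraph: vertex set V, edge set E, and each edge e has a set
  ends e of one or two endvertices (one endvertex = loop).\<close>
definition graph :: "'v set \<Rightarrow> 'e set \<Rightarrow> ('e \<Rightarrow> 'v set) \<Rightarrow> bool" where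
  "graph V E ends \<longleftrightarrow> finite V \<and> finite E \<and>
     (\<forall>e\<in>E. ends e \<subseteq> V \<and> 1 \<le> card (ends e) \<and> card (ends e) \<le> 2)"

definition deg :: "'e set \<Rightarrow> ('e \<Rightarrow> 'v set) \<Rightarrow> 'v \<Rightarrow> nat" where
  "deg E ends v = card {e\<in>E. v \<in> ends e}"

definition max_deg :: "'v set \<Rightarrow> 'e set \<Rightarrow> ('e \<Rightarrow> 'v set) \<Rightarrow> nat" where
  "max_deg V E ends = Max (insert 0 (deg E ends ` V))"

definition adj :: "('e \<Rightarrow> 'v set) \<Rightarrow> 'e set \<Rightarrow> ('v \<times> 'v) set" where
  "adj ends A = {(u, w). \<exists>e\<in>A. u \<in> ends e \<and> w \<in> ends e}"

definition ncomp :: "'v set \<Rightarrow> ('e \<Rightarrow> 'v set) \<Rightarrow> 'e set \<Rightarrow> nat" where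
  "ncomp V ends A = card (V // ((adj ends A)\<^sup>*))"

definition potts_states :: "'v set \<Rightarrow> nat \<Rightarrow> ('v \<Rightarrow> nat) set" where
  "potts_states V q = (V \<rightarrow>\<^sub>E {1..q})"

definition mono_edges :: "'e set \<Rightarrow> ('e \<Rightarrow> 'v set) \<Rightarrow> ('v \<Rightarrow> nat) \<Rightarrow> 'e set" where
  "mono_edges E ends \<sigma> = {e\<in>E. card (\<sigma> ` ends e) = 1}"

definition potts_Z :: "'v set \<Rightarrow> 'e set \<Rightarrow> ('e \<Rightarrow> 'v set) \<Rightarrow> nat \<Rightarrow> real \<Rightarrow> real" where
  "potts_Z V E ends q \<beta> = (\<Sum>\<sigma>\<in>potts_states V q. exp (\<beta> * real (card (mono_edges E ends \<sigma>))))"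

definition potts_pi :: "'v set \<Rightarrow> 'e set \<Rightarrow> ('e \<Rightarrow> 'v set) \<Rightarrow> nat \<Rightarrow> real \<Rightarrow> ('v \<Rightarrow> nat) \<Rightarrow> real" where
  "potts_pi V E ends q \<beta> \<sigma> = exp (\<beta> * real (card (mono_edges E ends \<sigma>))) / potts_Z V E ends q \<beta>"

definition P_HB :: "'v set \<Rightarrow> 'e set \<Rightarrow> ('e \<Rightarrow> 'v set) \<Rightarrow> nat \<Rightarrow> real \<Rightarrow>
    ('v \<Rightarrow> nat) \<Rightarrow> ('v \<Rightarrow> nat) \<Rightarrow> real" where
  "P_HB V E ends q \<beta> \<sigma> \<tau> =
     (1 / real (card V)) *
     (\<Sum>v\<in>V. (if \<tau> \<in> {\<sigma>(v := l) | l. l \<in> {1..q}}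
              then potts_pi V E ends q \<beta> \<tau> /
                   (\<Sum>l\<in>{1..q}. potts_pi V E ends q \<beta> (\<sigma>(v := l)))
              else 0))"

definition P_SW :: "'v set \<Rightarrow> 'e set \<Rightarrow> ('e \<Rightarrow> 'v set) \<Rightarrow> nat \<Rightarrow> real \<Rightarrow>
    ('v \<Rightarrow> nat) \<Rightarrow> ('v \<Rightarrow> nat) \<Rightarrow> real" where
  "P_SW V E ends q \<beta> \<sigma> \<tau> =
     (let p = 1 - exp (- \<beta>) in
      (1 - p) ^ card (mono_edges E ends \<sigma>) *
      (\<Sum>A\<in>Pow (mono_edges E ends \<sigma> \<inter> mono_edges E ends \<tau>).
          (p / (1 - p)) ^ card A * inverse (real q ^ ncomp V ends A)))"

definition is_eigenvalue :: "'s set \<Rightarrow> ('s \<Rightarrow> 's \<Rightarrow> real) \<Rightarrow> complex \<Rightarrow> bool" where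
  "is_eigenvalue \<Omega> P \<xi> \<longleftrightarrow>
     (\<exists>f :: 's \<Rightarrow> complex. (\<exists>\<sigma>\<in>\<Omega>. f \<sigma> \<noteq> 0) \<and>
        (\<forall>\<sigma>\<in>\<Omega>. (\<Sum>\<tau>\<in>\<Omega>. complex_of_real (P \<sigma> \<tau>) * f \<tau>) = \<xi> * f \<sigma>))"

definition spectral_gap :: "'s set \<Rightarrow> ('s \<Rightarrow> 's \<Rightarrow> real) \<Rightarrow> real" where
  "spectral_gap \<Omega> P = 1 - Max (insert 0 {cmod \<xi> | \<xi>. is_eigenvalue \<Omega> P \<xi> \<and> \<xi> \<noteq> 1})"

end

theory Submission imports Defs "Jordan_Normal_Form.Char_Poly" begin

lemma eig_finite:
  fixes Om :: "'s set" and P :: "'s \<Rightarrow> 's \<Rightarrow> real"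
  assumes fin: "finite Om"
  shows "finite {\<xi>. is_eigenvalue Om P \<xi>}"
proof -
  obtain xs where xs: "set xs = Om" "distinct xs" using finite_distinct_list[OF fin] by blast
  define n where "n = length xs"
  define A :: "complex Matrix.mat" where "A = Matrix.mat n n (\<lambda>(i,j). complex_of_real (P (xs!i) (xs!j)))"
  have A: "A \<in> carrier_mat n n" unfolding A_def by simp
  have bij: "bij_betw (nth xs) {0..<n} Om" using bij_betw_nth[OF xs(2), of "{..<n}"] xs n_def
    by (simp add: atLeast0LessThan)
  have "is_eigenvalue Om P \<xi> \<Longrightarrow> eigenvalue A \<xi>" for \<xi>
  proof -
    assume "is_eigenvalue Om P \<xi>"
    then obtain f where f0: "\<exists>\<sigma>\<in>Om. f \<sigma> \<noteq> 0"
      and fe: "\<forall>\<sigma>\<in>Om. (\<Sum>\<tau>\<in>Om. complex_of_real (P \<sigma> \<tau>) * f \<tau>) = \<xi> * f \<sigma>"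
      unfolding is_eigenvalue_def by blast
    define v where "v = Matrix.vec n (\<lambda>i. f (xs!i))"
    have vc: "v \<in> carrier_vec n" unfolding v_def by simp
    have vnz: "v \<noteq> 0\<^sub>v n"
    proof
      assume "v = 0\<^sub>v n"
      from f0 obtain s where s: "s \<in> Om" "f s \<noteq> 0" by blast
      then obtain i where i: "i < n" "xs ! i = s" using xs n_def by (metis in_set_conv_nth)
      have "v $ i = 0" using \<open>v = 0\<^sub>v n\<close> i by simp
      then show False using i s unfolding v_def by simp
    qed
    have "A *\<^sub>v v = \<xi> \<cdot>\<^sub>v v"
    proof (rule eq_vecI)
      fix i assume i: "i < dim_vec (\<xi> \<cdot>\<^sub>v v)"
      then have i': "i < n" unfolding v_def by simp
      have "(A *\<^sub>v v) $ i = (\<Sum>j\<in>{0..<n}. complex_of_real (P (xs!i) (xs!j)) * f (xs!j))"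
        using i' unfolding A_def v_def by (simp add: scalar_prod_def)
      also have "\<dots> = (\<Sum>\<tau>\<in>Om. complex_of_real (P (xs!i) \<tau>) * f \<tau>)"
        using sum.reindex_bij_betw[OF bij, of "\<lambda>\<tau>. complex_of_real (P (xs!i) \<tau>) * f \<tau>"] by simp
      also have "\<dots> = \<xi> * f (xs!i)" using fe i' xs n_def by auto
      finally show "(A *\<^sub>v v) $ i = (\<xi> \<cdot>\<^sub>v v) $ i" using i' unfolding v_def by simp
    next
      show "dim_vec (A *\<^sub>v v) = dim_vec (\<xi> \<cdot>\<^sub>v v)" using A vc by simp
    qed
    then show "eigenvalue A \<xi>" unfolding eigenvalue_def eigenvector_def using vc vnz A by auto
  qed
  then have sub: "{\<xi>. is_eigenvalue Om P \<xi>} \<subseteq> {x. poly (char_poly A) x = 0}"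
    using eigenvalue_root_char_poly[OF A] by auto
  have "char_poly A \<noteq> 0" using degree_monic_char_poly[OF A] by auto
  then show ?thesis using poly_roots_finite finite_subset[OF sub] by blast
qed

locale rchain =
  fixes Om :: "'s set" and pi :: "'s \<Rightarrow> real" and P :: "'s \<Rightarrow> 's \<Rightarrow> real"
  assumes fin: "finite Om" and pos: "\<And>s. s \<in> Om \<Longrightarrow> pi s > 0"
    and sym: "\<And>s t. s \<in> Om \<Longrightarrow> t \<in> Om \<Longrightarrow> pi s * P s t = pi t * P t s"
    and stoch: "\<And>s. s \<in> Om \<Longrightarrow> (\<Sum>t\<in>Om. P s t) = 1"
    and Pnn: "\<And>s t. s \<in> Om \<Longrightarrow> t \<in> Om \<Longrightarrow> P s t \<ge> 0"
begin

lemma pi_nn: "s \<in> Om \<Longrightarrow> 0 \<le> pi s" using pos[of s] by simp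

definition Pv :: "('s \<Rightarrow> real) \<Rightarrow> 's \<Rightarrow> real" where
  "Pv x s = (\<Sum>t\<in>Om. P s t * x t)"
definition ip :: "('s \<Rightarrow> real) \<Rightarrow> ('s \<Rightarrow> real) \<Rightarrow> real" where
  "ip x y = (\<Sum>s\<in>Om. pi s * x s * y s)"
definition nrm where "nrm x = ip x x"
definition Q where "Q x = ip x (Pv x)"
definition mean where "mean x = (\<Sum>s\<in>Om. pi s * x s)"
definition Dir where "Dir x = (\<Sum>s\<in>Om. \<Sum>t\<in>Om. pi s * P s t * (x s - x t)^2) / 2"

lemma ip_sym_P: "ip x (Pv y) = ip y (Pv x)"
proof -
  have "ip x (Pv y) = (\<Sum>s\<in>Om. \<Sum>t\<in>Om. (pi s * P s t) * x s * y t)"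
    unfolding ip_def Pv_def by (simp add: sum_distrib_left mult.assoc mult.left_commute)
  also have "\<dots> = (\<Sum>s\<in>Om. \<Sum>t\<in>Om. (pi t * P t s) * x s * y t)"
    by (intro sum.cong refl) (simp add: sym)
  also have "\<dots> = (\<Sum>t\<in>Om. \<Sum>s\<in>Om. (pi t * P t s) * x s * y t)" by (rule sum.swap)
  also have "\<dots> = ip y (Pv x)"
    unfolding ip_def Pv_def by (simp add: sum_distrib_left mult.assoc mult.left_commute mult.commute)
  finally show ?thesis .
qed

lemma mean_Pv: "mean (Pv x) = mean x"
proof -
  have "mean (Pv x) = ip (\<lambda>_. 1) (Pv x)" unfolding mean_def ip_def by simp
  also have "\<dots> = ip x (Pv (\<lambda>_. 1))" by (rule ip_sym_P)
  also have "\<dots> = mean x" unfolding ip_def mean_def Pv_def by (simp add: stoch)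
  finally show ?thesis .
qed

lemma nrm_nonneg: "nrm x \<ge> 0"
  unfolding nrm_def ip_def using pi_nn by (intro sum_nonneg) (metis mult.assoc mult_nonneg_nonneg zero_le_square)

lemma nrm_zero: "nrm x = 0 \<Longrightarrow> s \<in> Om \<Longrightarrow> x s = 0"
proof -
  assume n: "nrm x = 0" and s: "s \<in> Om"
  have "\<forall>t\<in>Om. pi t * x t * x t = 0"
    using n fin pos unfolding nrm_def ip_def
    by (subst sum_nonneg_eq_0_iff[symmetric]) (auto, metis mult.assoc mult_nonneg_nonneg zero_le_square pi_nn)
  then show "x s = 0" using s pos[OF s] by auto
qed

lemma nrm_pos: "s \<in> Om \<Longrightarrow> x s \<noteq> 0 \<Longrightarrow> nrm x > 0"
  using nrm_zero nrm_nonneg by (metis less_eq_real_def)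

lemma Dir_eq: "nrm x - Q x = Dir x"
proof -
  have e: "(\<Sum>s\<in>Om. \<Sum>t\<in>Om. pi s * P s t * (x s - x t)^2)
     = (\<Sum>s\<in>Om. \<Sum>t\<in>Om. pi s * P s t * (x s)^2) + (\<Sum>s\<in>Om. \<Sum>t\<in>Om. pi s * P s t * (x t)^2)
       - 2 * (\<Sum>s\<in>Om. \<Sum>t\<in>Om. pi s * P s t * x s * x t)"
    by (simp add: power2_diff algebra_simps sum.distrib sum_subtractf sum_distrib_left)
  have a1: "(\<Sum>s\<in>Om. \<Sum>t\<in>Om. pi s * P s t * (x s)^2) = nrm x"
    unfolding nrm_def ip_def
    by (intro sum.cong refl) (simp add: sum_distrib_left[symmetric] sum_distrib_right[symmetric] stoch power2_eq_square algebra_simps)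
  have "(\<Sum>s\<in>Om. \<Sum>t\<in>Om. pi s * P s t * (x t)^2) = (\<Sum>s\<in>Om. \<Sum>t\<in>Om. pi t * P t s * (x t)^2)"
    by (intro sum.cong refl) (simp add: sym)
  also have "\<dots> = (\<Sum>t\<in>Om. \<Sum>s\<in>Om. pi t * P t s * (x t)^2)" by (rule sum.swap)
  also have "\<dots> = nrm x"
    unfolding nrm_def ip_def
    by (intro sum.cong refl) (simp add: sum_distrib_left[symmetric] sum_distrib_right[symmetric] stoch power2_eq_square algebra_simps)
  finally have a2: "(\<Sum>s\<in>Om. \<Sum>t\<in>Om. pi s * P s t * (x t)^2) = nrm x" .
  have a3: "(\<Sum>s\<in>Om. \<Sum>t\<in>Om. pi s * P s t * x s * x t) = Q x"
    unfolding Q_def ip_def Pv_def by (simp add: sum_distrib_left algebra_simps)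
  show ?thesis unfolding Dir_def using e a1 a2 a3 by simp
qed

lemma Dir_nonneg: "Dir x \<ge> 0"
  unfolding Dir_def using pos Pnn
  by (auto intro!: sum_nonneg divide_nonneg_nonneg mult_nonneg_nonneg pi_nn)

lemma ip_cong: "(\<And>s. s \<in> Om \<Longrightarrow> x s = x' s) \<Longrightarrow> (\<And>s. s \<in> Om \<Longrightarrow> y s = y' s) \<Longrightarrow> ip x y = ip x' y'"
  unfolding ip_def by (intro sum.cong) auto

lemma Pv_cong: "(\<And>s. s \<in> Om \<Longrightarrow> x s = x' s) \<Longrightarrow> Pv x s = Pv x' s"
  unfolding Pv_def by (intro sum.cong) auto

lemma ip_comm: "ip x y = ip y x"
  unfolding ip_def by (simp add: algebra_simps)

lemma ip_lin: "(\<And>s. s \<in> Om \<Longrightarrow> y s = c * x s + d * z s) \<Longrightarrow> ip w y = c * ip w x + d * ip w z"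
proof -
  assume h: "\<And>s. s \<in> Om \<Longrightarrow> y s = c * x s + d * z s"
  have "ip w y = (\<Sum>s\<in>Om. c * (pi s * w s * x s) + d * (pi s * w s * z s))"
    unfolding ip_def by (intro sum.cong) (auto simp: h algebra_simps)
  then show ?thesis unfolding ip_def by (simp add: sum.distrib sum_distrib_left)
qed

lemma Pv_lin: "Pv (\<lambda>s. c * x s + d * y s) s = c * Pv x s + d * Pv y s"
  unfolding Pv_def by (simp add: sum.distrib sum_distrib_left algebra_simps)

lemma mean_lin: "(\<And>s. s \<in> Om \<Longrightarrow> y s = c * x s) \<Longrightarrow> mean y = c * mean x"
  unfolding mean_def by (simp add: sum_distrib_left algebra_simps)

lemma eig_real:
  assumes ev: "is_eigenvalue Om P \<xi>" and ne: "\<xi> \<noteq> 1"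
  obtains a b where "Im \<xi> = 0" "mean a = 0" "mean b = 0" "nrm a + nrm b > 0"
    "Re \<xi> * (nrm a + nrm b) = Q a + Q b"
proof -
  obtain f where f0: "\<exists>\<sigma>\<in>Om. f \<sigma> \<noteq> 0"
    and fe: "\<forall>\<sigma>\<in>Om. (\<Sum>\<tau>\<in>Om. complex_of_real (P \<sigma> \<tau>) * f \<tau>) = \<xi> * f \<sigma>"
    using ev unfolding is_eigenvalue_def by blast
  define a where "a = (\<lambda>s. Re (f s))"
  define b where "b = (\<lambda>s. Im (f s))"
  have ea: "Pv a s = Re \<xi> * a s + (- Im \<xi>) * b s" if s: "s \<in> Om" for s
  proof -
    have "Re (\<Sum>\<tau>\<in>Om. complex_of_real (P s \<tau>) * f \<tau>) = Re (\<xi> * f s)" using fe s by simp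
    then show ?thesis unfolding Pv_def a_def b_def by (simp add: Re_sum)
  qed
  have eb: "Pv b s = Im \<xi> * a s + Re \<xi> * b s" if s: "s \<in> Om" for s
  proof -
    have "Im (\<Sum>\<tau>\<in>Om. complex_of_real (P s \<tau>) * f \<tau>) = Im (\<xi> * f s)" using fe s by simp
    then show ?thesis unfolding Pv_def a_def b_def by (simp add: Im_sum algebra_simps)
  qed
  have h1: "ip a (Pv a) = Re \<xi> * nrm a + (- Im \<xi>) * ip a b" unfolding nrm_def by (rule ip_lin[OF ea])
  have h2: "ip b (Pv b) = Im \<xi> * ip b a + Re \<xi> * nrm b" unfolding nrm_def by (rule ip_lin[OF eb])
  have h3: "ip b (Pv a) = Re \<xi> * ip b a + (- Im \<xi>) * nrm b" unfolding nrm_def by (rule ip_lin[OF ea])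
  have h4: "ip a (Pv b) = Im \<xi> * nrm a + Re \<xi> * ip a b" unfolding nrm_def by (rule ip_lin[OF eb])
  have "ip a (Pv b) = ip b (Pv a)" by (rule ip_sym_P)
  then have im0: "Im \<xi> * (nrm a + nrm b) = 0" using h3 h4 ip_comm[of a b] by (simp add: algebra_simps)
  obtain s0 where s0: "s0 \<in> Om" "f s0 \<noteq> 0" using f0 by blast
  have "a s0 \<noteq> 0 \<or> b s0 \<noteq> 0" using s0 unfolding a_def b_def by (metis complex_eqI zero_complex.simps)
  then have pos': "nrm a + nrm b > 0" using nrm_pos[OF s0(1)] nrm_nonneg[of a] nrm_nonneg[of b] by fastforce
  then have im: "Im \<xi> = 0" using im0 by simp
  have re1: "Re \<xi> \<noteq> 1" using ne im by (metis complex_eqI one_complex.simps)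
  have ma: "mean a = 0"
  proof -
    have "mean (Pv a) = Re \<xi> * mean a" by (rule mean_lin) (simp add: ea im)
    then have "(1 - Re \<xi>) * mean a = 0" using mean_Pv[of a] by (simp add: algebra_simps)
    then show ?thesis using re1 by simp
  qed
  have mb: "mean b = 0"
  proof -
    have "mean (Pv b) = Re \<xi> * mean b" by (rule mean_lin) (simp add: eb im)
    then have "(1 - Re \<xi>) * mean b = 0" using mean_Pv[of b] by (simp add: algebra_simps)
    then show ?thesis using re1 by simp
  qed
  have "Re \<xi> * (nrm a + nrm b) = Q a + Q b" unfolding Q_def using h1 h2 im by (simp add: algebra_simps)
  then show ?thesis using that im ma mb pos' by blast
qed

end

context rchain begin

lemma spectral:
  assumes erg: "\<And>g. mean g = 0 \<Longrightarrow> Dir g = 0 \<Longrightarrow> \<forall>s\<in>Om. g s = 0"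
    and mg: "mean g = 0"
  shows "Q g \<le> Max (insert 0 {cmod \<xi> | \<xi>. is_eigenvalue Om P \<xi> \<and> \<xi> \<noteq> 1}) * nrm g"
proof -
  define rho where "rho = Max (insert 0 {cmod \<xi> | \<xi>. is_eigenvalue Om P \<xi> \<and> \<xi> \<noteq> 1})"
  have "{cmod \<xi> | \<xi>. is_eigenvalue Om P \<xi> \<and> \<xi> \<noteq> 1} \<subseteq> cmod ` {\<xi>. is_eigenvalue Om P \<xi>}" by auto
  then have finS: "finite (insert 0 {cmod \<xi> | \<xi>. is_eigenvalue Om P \<xi> \<and> \<xi> \<noteq> 1})"
    using eig_finite[OF fin, of P] finite_subset by blast
  have rho_ge: "cmod \<xi> \<le> rho" if "is_eigenvalue Om P \<xi>" "\<xi> \<noteq> 1" for \<xi>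
    unfolding rho_def by (rule Max_ge[OF finS]) (use that in auto)
  have rho_nn: "0 \<le> rho" unfolding rho_def by (rule Max_ge[OF finS]) auto
  have Q0: "Q x = 0" if "nrm x = 0" for x
  proof -
    have "Q x = ip (\<lambda>_. 0) (Pv x)" unfolding Q_def by (rule ip_cong) (use nrm_zero[OF that] in auto)
    then show ?thesis unfolding ip_def by simp
  qed
  define B where "B = 1 + (\<Sum>s\<in>Om. 1 / pi s)"
  have B1: "B \<ge> 1" unfolding B_def using pi_nn by (simp add: sum_nonneg)
  define X where "X = product_topology (\<lambda>_. euclideanreal) Om"
  define Cube where "Cube = PiE Om (\<lambda>_. {-B..B})"
  define Sph where "Sph = {x \<in> topspace X. mean x = 0 \<and> nrm x = 1} \<inter> Cube"
  have topX: "topspace X = PiE Om (\<lambda>_. UNIV)" unfolding X_def by simp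
  have normz: "restrict (\<lambda>s. x s / sqrt (nrm x)) Om \<in> Sph \<and> Q (restrict (\<lambda>s. x s / sqrt (nrm x)) Om) = Q x / nrm x"
    if mx: "mean x = 0" and nx: "nrm x > 0" for x
  proof -
    define c where "c = 1 / sqrt (nrm x)"
    define y where "y = restrict (\<lambda>s. x s / sqrt (nrm x)) Om"
    have yc: "y s = c * x s" if "s \<in> Om" for s using that unfolding y_def c_def by simp
    have sq: "sqrt (nrm x) * sqrt (nrm x) = nrm x" using nx by simp
    have "c * c = 1 / (sqrt (nrm x) * sqrt (nrm x))" unfolding c_def by simp
    then have c2: "c * c = 1 / nrm x" using sq by simp
    have ny: "nrm y = c * c * nrm x"
    proof -
      have "nrm y = c * ip y x + 0 * ip y x" unfolding nrm_def by (rule ip_lin) (simp add: yc)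
      also have "ip y x = ip x y" by (rule ip_comm)
      also have "ip x y = c * ip x x + 0 * ip x x" by (rule ip_lin) (simp add: yc)
      finally show ?thesis unfolding nrm_def by simp
    qed
    have ny1: "nrm y = 1" using ny c2 nx by simp
    have my: "mean y = 0" using mean_lin[of y c x] yc mx by simp
    have Pvy: "Pv y s = c * Pv x s" for s
    proof -
      have "Pv y s = Pv (\<lambda>s. c * x s + 0 * x s) s" by (rule Pv_cong) (simp add: yc)
      then show ?thesis by (simp only: Pv_lin)
    qed
    have Qy: "Q y = c * c * Q x"
    proof -
      have "Q y = ip y (\<lambda>s. c * Pv x s + 0 * Pv x s)" unfolding Q_def
        by (rule ip_cong) (auto simp: Pvy)
      also have "\<dots> = c * ip y (Pv x) + 0" using ip_lin[of "\<lambda>s. c * Pv x s + 0 * Pv x s" c "Pv x" 0 "Pv x" y] by simp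
      also have "ip y (Pv x) = ip (Pv x) y" by (rule ip_comm)
      also have "\<dots> = c * ip (Pv x) x + 0 * ip (Pv x) x" by (rule ip_lin) (simp add: yc)
      finally show ?thesis unfolding Q_def by (simp add: ip_comm)
    qed
    have yin: "y \<in> Cube"
      unfolding Cube_def
    proof (rule PiE_I)
      fix s assume s: "s \<in> Om"
      have nnt: "0 \<le> pi t * y t * y t" if "t \<in> Om" for t
      proof -
        have "0 \<le> pi t * (y t * y t)" using pi_nn[OF that] by simp
        then show ?thesis by (simp only: mult.assoc)
      qed
      have "pi s * y s * y s \<le> nrm y"
        unfolding nrm_def ip_def
        by (rule member_le_sum[OF s _ fin]) (simp add: nnt)
      then have "(y s)^2 * pi s \<le> 1" using ny1 by (simp add: power2_eq_square mult_ac)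
      then have "(y s)^2 \<le> 1 / pi s" by (rule pos_le_divide_eq[OF pos[OF s], THEN iffD2])
      also have "1 / pi s \<le> (\<Sum>s\<in>Om. 1 / pi s)"
        by (rule member_le_sum[OF s _ fin]) (simp add: pi_nn)
      finally have y2: "(y s)^2 \<le> B" unfolding B_def by simp
      have "\<bar>y s\<bar> \<le> B"
      proof (cases "\<bar>y s\<bar> \<le> 1")
        case True then show ?thesis using B1 by simp
      next
        case False
        then have "\<bar>y s\<bar> * 1 \<le> \<bar>y s\<bar> * \<bar>y s\<bar>" by (intro mult_left_mono) auto
        also have "\<dots> = (y s)^2" by (simp add: power2_eq_square abs_mult_self_eq)
        finally show ?thesis using y2 by simp
      qed
      then show "y s \<in> {-B..B}" by auto
    next
      fix s assume "s \<notin> Om" then show "y s = undefined" unfolding y_def by simp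
    qed
    have "y \<in> topspace X" unfolding topX y_def by simp
    then have "y \<in> Sph" unfolding Sph_def using yin ny1 my by blast
    moreover have "Q y = Q x / nrm x" using Qy c2 by simp
    ultimately show ?thesis unfolding y_def by simp
  qed
  show ?thesis
  proof (cases "Sph = {}")
    case True
    have "nrm g = 0"
    proof (rule ccontr)
      assume "nrm g \<noteq> 0"
      then have "nrm g > 0" using nrm_nonneg[of g] by simp
      then show False using normz[OF mg] True by blast
    qed
    then show ?thesis using Q0 unfolding rho_def[symmetric] by simp
  next
    case False
    have contmean: "continuous_map X euclideanreal mean"
      unfolding mean_def X_def
      by (intro continuous_map_sum continuous_map_real_mult continuous_map_const[THEN iffD2] continuous_map_product_projection) (auto simp: fin)
    have contnrm: "continuous_map X euclideanreal nrm"
      unfolding nrm_def ip_def X_def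
      by (intro continuous_map_sum continuous_map_real_mult continuous_map_const[THEN iffD2] continuous_map_product_projection) (auto simp: fin)
    have contQ: "continuous_map X euclideanreal Q"
      unfolding Q_def ip_def Pv_def X_def
      by (intro continuous_map_sum continuous_map_real_mult continuous_map_const[THEN iffD2] continuous_map_product_projection) (auto simp: fin)
    have cl1: "closedin X {x \<in> topspace X. mean x \<in> {0}}"
      by (rule closedin_continuous_map_preimage[OF contmean]) simp
    have cl2: "closedin X {x \<in> topspace X. nrm x \<in> {1}}"
      by (rule closedin_continuous_map_preimage[OF contnrm]) simp
    have ccube: "compactin X Cube" unfolding X_def Cube_def by (simp add: compactin_PiE)
    have "Sph = ({x \<in> topspace X. mean x \<in> {0}} \<inter> {x \<in> topspace X. nrm x \<in> {1}}) \<inter> Cube"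
      unfolding Sph_def by auto
    then have csph: "compactin X Sph" using closed_Int_compactin[OF closedin_Int[OF cl1 cl2] ccube] by simp
    have "compactin euclideanreal (Q ` Sph)" by (rule image_compactin[OF csph contQ])
    then have "compact (Q ` Sph)" by simp
    then obtain f where fS: "f \<in> Sph" and fmax: "\<And>y. y \<in> Sph \<Longrightarrow> Q y \<le> Q f"
      using compact_attains_sup[of "Q ` Sph"] False by auto
    define M where "M = Q f"
    have mf: "mean f = 0" and nf: "nrm f = 1" using fS unfolding Sph_def by auto
    have bound: "Q x \<le> M * nrm x" if "mean x = 0" for x
    proof (cases "nrm x = 0")
      case True then show ?thesis using Q0 by simp
    next
      case False
      then have nx: "nrm x > 0" using nrm_nonneg[of x] by simp
      from normz[OF that nx] have "Q x / nrm x \<le> M" unfolding M_def using fmax by metis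
      then show ?thesis using nx by (simp add: field_simps)
    qed
    define h where "h = (\<lambda>s. Pv f s - M * f s)"
    have mh: "mean h = 0"
    proof -
      have "mean h = mean (Pv f) - M * mean f" unfolding h_def mean_def
        by (simp add: sum_subtractf sum_distrib_left algebra_simps)
      then show ?thesis using mean_Pv[of f] mf by simp
    qed
    have ineq: "2 * t * nrm h + t * t * (Q h - M * nrm h) \<le> 0" for t
    proof -
      define x where "x = (\<lambda>s. 1 * f s + t * h s)"
      have "mean x = mean f + t * mean h" unfolding x_def mean_def
        by (simp add: sum.distrib sum_distrib_left algebra_simps)
      then have mx: "mean x = 0" using mf mh by simp
      have Pvx: "Pv x s = 1 * Pv f s + t * Pv h s" for s unfolding x_def by (rule Pv_lin)
      have Qx: "Q x = Q f + t * ip f (Pv h) + t * ip h (Pv f) + t * t * Q h"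
      proof -
        have "Q x = 1 * ip (Pv x) f + t * ip (Pv x) h" unfolding Q_def
          by (subst ip_comm, rule ip_lin) (simp add: x_def)
        also have "ip (Pv x) f = ip f (Pv x)" by (rule ip_comm)
        also have "\<dots> = 1 * ip f (Pv f) + t * ip f (Pv h)" by (rule ip_lin) (simp add: Pvx)
        also have "ip (Pv x) h = ip h (Pv x)" by (rule ip_comm)
        also have "\<dots> = 1 * ip h (Pv f) + t * ip h (Pv h)" by (rule ip_lin) (simp add: Pvx)
        finally show ?thesis unfolding Q_def by (simp add: algebra_simps)
      qed
      have nx: "nrm x = nrm f + 2 * t * ip f h + t * t * nrm h"
      proof -
        have "nrm x = 1 * ip x f + t * ip x h" unfolding nrm_def by (rule ip_lin) (simp add: x_def)
        also have "ip x f = ip f x" by (rule ip_comm)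
        also have "\<dots> = 1 * ip f f + t * ip f h" by (rule ip_lin) (simp add: x_def)
        also have "ip x h = ip h x" by (rule ip_comm)
        also have "\<dots> = 1 * ip h f + t * ip h h" by (rule ip_lin) (simp add: x_def)
        finally show ?thesis unfolding nrm_def using ip_comm[of h f] by (simp add: algebra_simps)
      qed
      have hh: "nrm h = ip h (Pv f) - M * ip h f"
      proof -
        have "nrm h = 1 * ip h (Pv f) + (- M) * ip h f" unfolding nrm_def by (rule ip_lin) (simp add: h_def)
        then show ?thesis by simp
      qed
      have sy: "ip f (Pv h) = ip h (Pv f)" by (rule ip_sym_P)
      have "Q x \<le> M * nrm x" by (rule bound[OF mx])
      moreover have "Q x - M * nrm x = 2 * t * nrm h + t * t * (Q h - M * nrm h)"
      proof -
        have "Q x - M * nrm x = Q f + t * ip h (Pv f) + t * ip h (Pv f) + t * t * Q h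
            - M * (1 + 2 * t * ip h f + t * t * nrm h)"
          using Qx nx sy nf ip_comm[of h f] by simp
        also have "\<dots> = 2 * t * (ip h (Pv f) - M * ip h f) + t * t * (Q h - M * nrm h)"
          unfolding M_def by (simp add: algebra_simps)
        finally show ?thesis using hh by simp
      qed
      ultimately show ?thesis by linarith
    qed
    have nh0: "nrm h = 0"
    proof (rule ccontr)
      assume "nrm h \<noteq> 0"
      then have np: "nrm h > 0" using nrm_nonneg[of h] by simp
      define C where "C = Q h - M * nrm h"
      define t where "t = nrm h / (\<bar>C\<bar> + 1)"
      have tp: "t > 0" unfolding t_def using np by simp
      have "t * (\<bar>C\<bar> + 1) = nrm h" unfolding t_def by simp
      then have tC: "t * \<bar>C\<bar> \<le> nrm h" using tp by (simp add: distrib_left)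
      have "- (t * \<bar>C\<bar>) \<le> t * C" using tp
        by (metis abs_ge_minus_self abs_mult abs_of_pos minus_le_iff)
      then have "- nrm h \<le> t * C" using tC by linarith
      then have "t * (- nrm h) \<le> t * (t * C)" using tp by (intro mult_left_mono) auto
      then have "t * t * C \<ge> - (t * nrm h)" by (simp add: mult.assoc)
      moreover have "t * nrm h > 0" using tp np by simp
      ultimately have "2 * t * nrm h + t * t * C > 0" by linarith
      then show False using ineq[of t] unfolding C_def by simp
    qed
    have eig: "Pv f s = M * f s" if "s \<in> Om" for s using nrm_zero[OF nh0 that] unfolding h_def by simp
    have fnz: "\<exists>s\<in>Om. f s \<noteq> 0"
    proof (rule ccontr)
      assume "\<not> ?thesis"
      then have "nrm f = 0" unfolding nrm_def ip_def by simp
      then show False using nf by simp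
    qed
    have isev: "is_eigenvalue Om P (complex_of_real M)"
      unfolding is_eigenvalue_def
    proof (intro exI[of _ "\<lambda>s. complex_of_real (f s)"] conjI ballI)
      show "\<exists>\<sigma>\<in>Om. complex_of_real (f \<sigma>) \<noteq> 0" using fnz by simp
    next
      fix s assume s: "s \<in> Om"
      have "(\<Sum>\<tau>\<in>Om. complex_of_real (P s \<tau>) * complex_of_real (f \<tau>)) = complex_of_real (Pv f s)"
        unfolding Pv_def by simp
      also have "\<dots> = complex_of_real M * complex_of_real (f s)" using eig[OF s] by simp
      finally show "(\<Sum>\<tau>\<in>Om. complex_of_real (P s \<tau>) * complex_of_real (f \<tau>)) = complex_of_real M * complex_of_real (f s)" .
    qed
    have M1: "M \<noteq> 1"
    proof
      assume "M = 1"
      then have "Dir f = 0" using Dir_eq[of f] nf unfolding M_def by simp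
      then have "\<forall>s\<in>Om. f s = 0" using erg[OF mf] by simp
      then show False using fnz by simp
    qed
    have "\<bar>M\<bar> \<le> rho" using rho_ge[OF isev] M1 by simp
    then have "M \<le> rho" by simp
    then have "M * nrm g \<le> rho * nrm g" using nrm_nonneg[of g] by (simp add: mult_right_mono)
    then show ?thesis using bound[OF mg] unfolding rho_def by simp
  qed
qed

end

lemma sum_Pow_pow:
  fixes r :: real
  assumes "finite S"
  shows "(\<Sum>A\<in>Pow S. r ^ card A) = (1 + r) ^ card S"
  using assms
proof (induction S rule: finite_induct)
  case empty then show ?case by simp
next
  case (insert x F)
  have fP: "finite (Pow F)" using insert by simp
  have inj: "inj_on (insert x) (Pow F)" using insert(2) unfolding inj_on_def by (metis PowD insert_ident subsetD)
  have disj: "Pow F \<inter> insert x ` Pow F = {}" using insert(2) by blast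
  have "(\<Sum>A\<in>Pow (insert x F). r ^ card A) = (\<Sum>A\<in>Pow F. r ^ card A) + (\<Sum>A\<in>insert x ` Pow F. r ^ card A)"
    unfolding Pow_insert by (rule sum.union_disjoint) (use fP disj in auto)
  also have "(\<Sum>A\<in>insert x ` Pow F. r ^ card A) = (\<Sum>A\<in>Pow F. r ^ card (insert x A))"
    by (rule sum.reindex[OF inj, unfolded comp_def])
  also have "\<dots> = (\<Sum>A\<in>Pow F. r * r ^ card A)"
  proof (rule sum.cong[OF refl])
    fix A assume "A \<in> Pow F"
    then have "finite A" "x \<notin> A" using insert finite_subset by auto
    then show "r ^ card (insert x A) = r * r ^ card A" by simp
  qed
  also have "(\<Sum>A\<in>Pow F. r ^ card A) + (\<Sum>A\<in>Pow F. r * r ^ card A) = (1 + r) * (1 + r) ^ card F"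
    using insert.IH by (simp add: sum_distrib_left[symmetric] algebra_simps)
  finally show ?case using insert by simp
qed

lemma count_col:
  fixes V :: "'v set" and E :: "'e set" and q :: nat
  assumes g: "graph V E ends" and A: "A \<subseteq> E"
  shows "card {\<sigma> \<in> potts_states V q. A \<subseteq> mono_edges E ends \<sigma>} = q ^ ncomp V ends A"
proof -
  define R where "R = (adj ends A)\<^sup>*"
  define C where "C = V // R"
  define T where "T = {\<sigma> \<in> potts_states V q. A \<subseteq> mono_edges E ends \<sigma>}"
  have fV: "finite V" and endsV: "\<And>e. e \<in> E \<Longrightarrow> ends e \<subseteq> V" and endsne: "\<And>e. e \<in> E \<Longrightarrow> ends e \<noteq> {}"
    using g unfolding graph_def by (auto simp: card_gt_0_iff[symmetric])
  have symadj: "sym (adj ends A)" unfolding adj_def sym_def by blast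
  have eqR: "equiv UNIV R" unfolding R_def equiv_def
    using refl_rtrancl[of "adj ends A"] sym_rtrancl[OF symadj] trans_rtrancl[of "adj ends A"] by simp
  have adjV: "adj ends A \<subseteq> V \<times> V" unfolding adj_def using A endsV by blast
  have RV: "(u, w) \<in> R \<Longrightarrow> u \<in> V \<Longrightarrow> w \<in> V" for u w
    unfolding R_def by (induction rule: rtrancl_induct) (use adjV in auto)
  have mono_iff: "\<sigma> ` ends e = {\<sigma> u}" if "e \<in> A" "e \<in> mono_edges E ends \<sigma>" "u \<in> ends e" for \<sigma> e u
  proof -
    have "card (\<sigma> ` ends e) = 1" using that unfolding mono_edges_def by simp
    then obtain z where "\<sigma> ` ends e = {z}" by (rule card_1_singletonE)
    then show ?thesis using that(3) by auto
  qed
  have const: "\<sigma> u = \<sigma> w" if "A \<subseteq> mono_edges E ends \<sigma>" "(u, w) \<in> R" for \<sigma> u w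
    using that(2) unfolding R_def
  proof (induction rule: rtrancl_induct)
    case base then show ?case by simp
  next
    case (step y z)
    then obtain e where e: "e \<in> A" "y \<in> ends e" "z \<in> ends e" unfolding adj_def by blast
    then have "\<sigma> ` ends e = {\<sigma> y}" using mono_iff that(1) by blast
    then have "\<sigma> z = \<sigma> y" using e(3) by (metis imageI singletonD)
    then show ?case using step by simp
  qed
  have inR: "(u, w) \<in> R" if "e \<in> A" "u \<in> ends e" "w \<in> ends e" for e u w
    unfolding R_def adj_def using that by blast
  have clsV: "R``{v} \<subseteq> V" if "v \<in> V" for v using RV that by blast
  define g :: "('v set \<Rightarrow> nat) \<Rightarrow> 'v \<Rightarrow> nat" where "g = (\<lambda>h. restrict (\<lambda>v. h (R``{v})) V)"
  define g' :: "('v \<Rightarrow> nat) \<Rightarrow> 'v set \<Rightarrow> nat" where "g' = (\<lambda>\<sigma>. restrict (\<lambda>c. \<sigma> (SOME x. x \<in> c)) C)"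
  have some_in: "(SOME x. x \<in> R``{v}) \<in> R``{v}" for v
    by (rule someI[of _ v]) (use eqR in \<open>auto simp: equiv_def refl_on_def\<close>)
  have bij: "bij_betw g (C \<rightarrow>\<^sub>E {1..q}) T"
  proof (rule bij_betw_byWitness[where f'=g'])
    show "\<forall>h\<in>C \<rightarrow>\<^sub>E {1..q}. g' (g h) = h"
    proof
      fix h assume h: "h \<in> C \<rightarrow>\<^sub>E {1..q}"
      show "g' (g h) = h"
      proof
        fix c show "g' (g h) c = h c"
        proof (cases "c \<in> C")
          case True
          then obtain v where v: "v \<in> V" "c = R``{v}" unfolding C_def quotient_def by blast
          define x where "x = (SOME x. x \<in> R``{v})"
          have x: "(v, x) \<in> R" using some_in[of v] unfolding x_def by simp
          have xV: "x \<in> V" using RV[OF x v(1)] .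
          have "R``{x} = R``{v}" using equiv_class_eq[OF eqR x] by simp
          have e0: "g' (g h) c = g h (SOME x. x \<in> c)" using True unfolding g'_def by (rule restrict_apply')
          have "(SOME x. x \<in> c) = x" unfolding x_def v(2) ..
          then have e1: "g' (g h) c = g h x" using e0 by simp
          have e2: "g h x = h (R``{x})" using xV unfolding g_def by (rule restrict_apply')
          have e3: "h (R``{x}) = h c" by (metis \<open>R``{x} = R``{v}\<close> v(2))
          show ?thesis using e1 e2 e3 by (rule trans[OF trans])
        next
          case False then show ?thesis using h unfolding g'_def by (simp add: PiE_def extensional_def)
        qed
      qed
    qed
  next
    show "\<forall>\<sigma>\<in>T. g (g' \<sigma>) = \<sigma>"
    proof
      fix \<sigma> assume s: "\<sigma> \<in> T"
      show "g (g' \<sigma>) = \<sigma>"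
      proof
        fix v show "g (g' \<sigma>) v = \<sigma> v"
        proof (cases "v \<in> V")
          case True
          have cC: "R``{v} \<in> C" unfolding C_def quotient_def using True by blast
          have "\<sigma> (SOME x. x \<in> R``{v}) = \<sigma> v"
            using const[of \<sigma> v "SOME x. x \<in> R``{v}"] some_in[of v] s unfolding T_def by auto
          then show ?thesis using True cC unfolding g_def g'_def by simp
        next
          case False then show ?thesis using s unfolding g_def T_def potts_states_def
            by (simp add: PiE_def extensional_def)
        qed
      qed
    qed
  next
    show "g ` (C \<rightarrow>\<^sub>E {1..q}) \<subseteq> T"
    proof
      fix \<sigma> assume "\<sigma> \<in> g ` (C \<rightarrow>\<^sub>E {1..q})"
      then obtain h where h: "h \<in> C \<rightarrow>\<^sub>E {1..q}" and sg: "\<sigma> = g h" by blast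
      have "\<sigma> \<in> potts_states V q"
        unfolding potts_states_def sg g_def
      proof (rule PiE_I)
        fix v assume v: "v \<in> V"
        have "R``{v} \<in> C" unfolding C_def quotient_def using v by blast
        then have "h (R``{v}) \<in> {1..q}" using h by (rule PiE_mem[rotated])
        then show "restrict (\<lambda>v. h (R``{v})) V v \<in> {1..q}" using v by simp
      qed simp
      moreover have "A \<subseteq> mono_edges E ends \<sigma>"
      proof
        fix e assume e: "e \<in> A"
        then have eE: "e \<in> E" using A by blast
        obtain u where u: "u \<in> ends e" using endsne[OF eE] by blast
        have "\<sigma> ` ends e = {\<sigma> u}"
        proof -
          have "\<sigma> w = \<sigma> u" if w: "w \<in> ends e" for w
          proof -
            have "R``{w} = R``{u}" using equiv_class_eq[OF eqR inR[OF e w u]] .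
            moreover have "w \<in> V" "u \<in> V" using endsV[OF eE] w u by auto
            ultimately have "g h w = g h u" unfolding g_def by (simp only: restrict_apply')
            then show ?thesis unfolding sg .
          qed
          then show ?thesis using u by blast
        qed
        then show "e \<in> mono_edges E ends \<sigma>" unfolding mono_edges_def using eE by simp
      qed
      ultimately show "\<sigma> \<in> T" unfolding T_def by simp
    qed
  next
    show "g' ` T \<subseteq> C \<rightarrow>\<^sub>E {1..q}"
    proof
      fix h assume "h \<in> g' ` T"
      then obtain \<sigma> where s: "\<sigma> \<in> T" and hs: "h = g' \<sigma>" by blast
      show "h \<in> C \<rightarrow>\<^sub>E {1..q}"
        unfolding hs g'_def
      proof (rule PiE_I)
        fix c assume "c \<in> C"
        then obtain v where v: "v \<in> V" "c = R``{v}" unfolding C_def quotient_def by blast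
        have "\<sigma> (SOME x. x \<in> R``{v}) = \<sigma> v"
          using const[of \<sigma> v "SOME x. x \<in> R``{v}"] some_in[of v] s unfolding T_def by auto
        moreover have "\<sigma> v \<in> {1..q}" using s v unfolding T_def potts_states_def by auto
        ultimately show "restrict (\<lambda>c. \<sigma> (SOME x. x \<in> c)) C c \<in> {1..q}" using \<open>c \<in> C\<close> v by simp
      qed simp
    qed
  qed
  have fC: "finite C" unfolding C_def quotient_def using fV by simp
  have "card T = card (C \<rightarrow>\<^sub>E {1..q})" using bij_betw_same_card[OF bij] by simp
  also have "\<dots> = q ^ card C" using card_PiE[OF fC, of "\<lambda>_. {1..q}"] by simp
  finally show ?thesis unfolding T_def ncomp_def C_def R_def .
qed

locale potts =
  fixes V :: "'v set" and E :: "'e set" and ends :: "'e \<Rightarrow> 'v set" and q :: nat and \<beta> :: real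
  assumes g: "graph V E ends" and bnn: "\<beta> \<ge> 0" and q1: "q \<ge> 1" and Vne: "V \<noteq> {}"
begin

abbreviation "Om \<equiv> potts_states V q"
abbreviation "pp \<equiv> potts_pi V E ends q \<beta>"
abbreviation "monE \<equiv> mono_edges E ends"
abbreviation "Zp \<equiv> potts_Z V E ends q \<beta>"
abbreviation "PSW \<equiv> P_SW V E ends q \<beta>"
abbreviation "PHB \<equiv> P_HB V E ends q \<beta>"

definition r :: real where "r = exp \<beta> - 1"
definition wA :: "'e set \<Rightarrow> real" where "wA A = r ^ card A * inverse (real q ^ ncomp V ends A)"
definition KS where "KS \<sigma> \<tau> = (\<Sum>A\<in>Pow (monE \<sigma> \<inter> monE \<tau>). wA A)"

lemma fV: "finite V" and fE: "finite E" using g unfolding graph_def by auto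
lemma finOm: "finite Om" unfolding potts_states_def using fV by (simp add: finite_PiE)
lemma one_in: "(\<lambda>v\<in>V. 1) \<in> Om" unfolding potts_states_def using q1 by auto
lemma Om_ne: "Om \<noteq> {}" using one_in by blast
lemma mono_sub: "monE \<sigma> \<subseteq> E" unfolding mono_edges_def by auto
lemma Zp_pos: "Zp > 0"
  unfolding potts_Z_def using finOm Om_ne by (intro sum_pos) auto
lemma pp_eq: "pp \<sigma> = exp (\<beta> * real (card (monE \<sigma>))) / Zp" unfolding potts_pi_def ..
lemma pp_pos: "pp \<sigma> > 0" unfolding pp_eq using Zp_pos by simp
lemma r_nn: "r \<ge> 0" unfolding r_def using bnn by simp
lemma wA_nn: "wA A \<ge> 0" unfolding wA_def using r_nn by simp

lemma colsum:
  assumes S: "S \<subseteq> E"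
  shows "(\<Sum>\<tau>\<in>Om. \<Sum>A\<in>{A. A \<in> Pow S \<and> A \<subseteq> monE \<tau>}. wA A) = exp (\<beta> * real (card S))"
proof -
  have fS: "finite S" using S fE finite_subset by blast
  have "(\<Sum>\<tau>\<in>Om. \<Sum>A\<in>{A. A \<in> Pow S \<and> A \<subseteq> monE \<tau>}. wA A)
      = (\<Sum>A\<in>Pow S. \<Sum>\<tau>\<in>{\<tau>. \<tau> \<in> Om \<and> A \<subseteq> monE \<tau>}. wA A)"
    by (rule sum.swap_restrict) (use finOm fS in auto)
  also have "\<dots> = (\<Sum>A\<in>Pow S. r ^ card A)"
  proof (rule sum.cong[OF refl])
    fix A assume A: "A \<in> Pow S"
    have c: "card {\<tau>. \<tau> \<in> Om \<and> A \<subseteq> monE \<tau>} = q ^ ncomp V ends A"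
      using count_col[OF g, of A q] A S by auto
    have "real q ^ ncomp V ends A > 0" using q1 by simp
    then show "(\<Sum>\<tau>\<in>{\<tau>. \<tau> \<in> Om \<and> A \<subseteq> monE \<tau>}. wA A) = r ^ card A"
      using c unfolding wA_def by simp
  qed
  also have "\<dots> = (1 + r) ^ card S" by (rule sum_Pow_pow[OF fS])
  also have "\<dots> = exp (\<beta> * real (card S))" unfolding r_def by (simp add: exp_of_nat_mult[symmetric] mult.commute)
  finally show ?thesis .
qed

lemma Ksw: "pp \<sigma> * PSW \<sigma> \<tau> = KS \<sigma> \<tau> / Zp"
proof -
  have e1: "1 - (1 - exp (- \<beta>)) = exp (- \<beta>)" by simp
  have e2: "(1 - exp (- \<beta>)) / exp (- \<beta>) = r" unfolding r_def
    by (simp add: exp_minus field_simps)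
  have e3: "exp (\<beta> * real (card (monE \<sigma>))) * exp (- \<beta>) ^ card (monE \<sigma>) = 1"
    by (simp add: exp_of_nat_mult[symmetric] exp_add[symmetric] mult.commute)
  have "pp \<sigma> * PSW \<sigma> \<tau> = (exp (\<beta> * real (card (monE \<sigma>))) * exp (- \<beta>) ^ card (monE \<sigma>)) * KS \<sigma> \<tau> / Zp"
    unfolding P_SW_def Let_def e1 e2 pp_eq KS_def wA_def by simp
  then show ?thesis using e3 by simp
qed

lemma KS_sym: "KS \<sigma> \<tau> = KS \<tau> \<sigma>" unfolding KS_def by (simp add: Int_commute)

lemma KS_nn: "KS \<sigma> \<tau> \<ge> 0" unfolding KS_def by (intro sum_nonneg wA_nn)

lemma KS_rowsum: "(\<Sum>\<tau>\<in>Om. KS \<sigma> \<tau>) = exp (\<beta> * real (card (monE \<sigma>)))"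
proof -
  have "(\<Sum>\<tau>\<in>Om. KS \<sigma> \<tau>) = (\<Sum>\<tau>\<in>Om. \<Sum>A\<in>{A. A \<in> Pow (monE \<sigma>) \<and> A \<subseteq> monE \<tau>}. wA A)"
    unfolding KS_def by (intro sum.cong refl arg_cong[where f="\<lambda>S. sum wA S"]) auto
  also have "\<dots> = exp (\<beta> * real (card (monE \<sigma>)))" by (rule colsum[OF mono_sub])
  finally show ?thesis .
qed

lemma PSW_eq: "PSW \<sigma> \<tau> = KS \<sigma> \<tau> / Zp / pp \<sigma>"
  using Ksw[of \<sigma> \<tau>] pp_pos[of \<sigma>] Zp_pos by (simp add: field_simps)

end

sublocale potts \<subseteq> SW: rchain "potts_states V q" "potts_pi V E ends q \<beta>" "P_SW V E ends q \<beta>"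
proof
  show "finite Om" by (rule finOm)
  show "\<And>s. s \<in> Om \<Longrightarrow> 0 < pp s" using pp_pos by simp
  show "\<And>s t. s \<in> Om \<Longrightarrow> t \<in> Om \<Longrightarrow> pp s * PSW s t = pp t * PSW t s"
    using Ksw KS_sym by simp
  show "\<And>s t. s \<in> Om \<Longrightarrow> t \<in> Om \<Longrightarrow> 0 \<le> PSW s t"
    unfolding PSW_eq using KS_nn Zp_pos pp_pos by (simp add: less_imp_le)
  show "(\<Sum>t\<in>Om. PSW s t) = 1" if "s \<in> Om" for s
  proof -
    have "pp s * (\<Sum>t\<in>Om. PSW s t) = (\<Sum>t\<in>Om. KS s t) / Zp"
      by (simp add: sum_distrib_left Ksw sum_divide_distrib)
    also have "\<dots> = pp s" unfolding KS_rowsum pp_eq ..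
    finally show ?thesis using pp_pos[of s] by simp
  qed
qed

context potts begin

lemma SW_psd: "SW.Q x \<ge> 0"
proof -
  define ind where "ind A \<sigma> = (if A \<subseteq> monE \<sigma> then 1 else (0::real))" for A \<sigma>
  have KS_ind: "KS \<sigma> \<tau> = (\<Sum>A\<in>Pow E. wA A * (ind A \<sigma> * ind A \<tau>))" for \<sigma> \<tau>
  proof -
    have "Pow (monE \<sigma> \<inter> monE \<tau>) = {A \<in> Pow E. A \<subseteq> monE \<sigma> \<and> A \<subseteq> monE \<tau>}"
      using mono_sub by auto
    then have "KS \<sigma> \<tau> = sum wA {A \<in> Pow E. A \<subseteq> monE \<sigma> \<and> A \<subseteq> monE \<tau>}"
      unfolding KS_def by simp
    also have "\<dots> = (\<Sum>A\<in>Pow E. if A \<subseteq> monE \<sigma> \<and> A \<subseteq> monE \<tau> then wA A else 0)"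
      by (rule sum.inter_filter) (simp add: fE)
    finally have "KS \<sigma> \<tau> = (\<Sum>A\<in>Pow E. if A \<subseteq> monE \<sigma> \<and> A \<subseteq> monE \<tau> then wA A else 0)" .
    moreover have "(\<lambda>A. if A \<subseteq> monE \<sigma> \<and> A \<subseteq> monE \<tau> then wA A else 0) = (\<lambda>A. wA A * (ind A \<sigma> * ind A \<tau>))"
      by (auto simp: ind_def fun_eq_iff)
    ultimately show ?thesis by metis
  qed
  have "SW.Q x = (\<Sum>\<sigma>\<in>Om. \<Sum>\<tau>\<in>Om. (pp \<sigma> * PSW \<sigma> \<tau>) * x \<sigma> * x \<tau>)"
    unfolding SW.Q_def SW.ip_def SW.Pv_def
  proof (rule sum.cong[OF refl])
    fix \<sigma> show "pp \<sigma> * x \<sigma> * (\<Sum>t\<in>Om. PSW \<sigma> t * x t) = (\<Sum>\<tau>\<in>Om. pp \<sigma> * PSW \<sigma> \<tau> * x \<sigma> * x \<tau>)"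
      by (simp only: sum_distrib_left) (simp only: mult_ac)
  qed
  also have "\<dots> = (\<Sum>\<sigma>\<in>Om. \<Sum>\<tau>\<in>Om. \<Sum>A\<in>Pow E. (wA A / Zp) * ((ind A \<sigma> * x \<sigma>) * (ind A \<tau> * x \<tau>)))"
  proof (intro sum.cong refl)
    fix \<sigma> \<tau>
    have "(pp \<sigma> * PSW \<sigma> \<tau>) * x \<sigma> * x \<tau> = (\<Sum>A\<in>Pow E. wA A * (ind A \<sigma> * ind A \<tau>)) / Zp * (x \<sigma> * x \<tau>)"
      unfolding Ksw KS_ind by (simp only: mult.assoc)
    also have "\<dots> = (\<Sum>A\<in>Pow E. wA A * (ind A \<sigma> * ind A \<tau>) / Zp * (x \<sigma> * x \<tau>))"
      by (simp only: sum_divide_distrib sum_distrib_right)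
    also have "\<dots> = (\<Sum>A\<in>Pow E. (wA A / Zp) * ((ind A \<sigma> * x \<sigma>) * (ind A \<tau> * x \<tau>)))"
      by (intro sum.cong refl) (simp add: field_simps)
    finally show "(pp \<sigma> * PSW \<sigma> \<tau>) * x \<sigma> * x \<tau> = (\<Sum>A\<in>Pow E. (wA A / Zp) * ((ind A \<sigma> * x \<sigma>) * (ind A \<tau> * x \<tau>)))" .
  qed
  also have "\<dots> = (\<Sum>\<sigma>\<in>Om. \<Sum>A\<in>Pow E. \<Sum>\<tau>\<in>Om. (wA A / Zp) * ((ind A \<sigma> * x \<sigma>) * (ind A \<tau> * x \<tau>)))"
    by (intro sum.cong refl sum.swap)
  also have "\<dots> = (\<Sum>A\<in>Pow E. \<Sum>\<sigma>\<in>Om. \<Sum>\<tau>\<in>Om. (wA A / Zp) * ((ind A \<sigma> * x \<sigma>) * (ind A \<tau> * x \<tau>)))"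
    by (rule sum.swap)
  also have "\<dots> = (\<Sum>A\<in>Pow E. (wA A / Zp) * ((\<Sum>\<sigma>\<in>Om. ind A \<sigma> * x \<sigma>) * (\<Sum>\<tau>\<in>Om. ind A \<tau> * x \<tau>)))"
    unfolding sum_product by (simp only: sum_distrib_left)
  also have "\<dots> \<ge> 0"
  proof (rule sum_nonneg)
    fix A
    have "0 \<le> wA A / Zp" using wA_nn Zp_pos by simp
    moreover have "0 \<le> (\<Sum>\<sigma>\<in>Om. ind A \<sigma> * x \<sigma>) * (\<Sum>\<tau>\<in>Om. ind A \<tau> * x \<tau>)" by simp
    ultimately show "0 \<le> wA A / Zp * ((\<Sum>\<sigma>\<in>Om. ind A \<sigma> * x \<sigma>) * (\<Sum>\<tau>\<in>Om. ind A \<tau> * x \<tau>))"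
      by (rule mult_nonneg_nonneg)
  qed
  finally show ?thesis .
qed

end

context potts begin

definition Zv where "Zv \<sigma> v = (\<Sum>l\<in>{1..q}. pp (\<sigma>(v := l)))"
definition Sn where "Sn \<sigma> v = {\<sigma>(v := l) | l. l \<in> {1..q}}"

lemma pp_nn: "0 \<le> pp \<sigma>" using pp_pos[of \<sigma>] by simp

lemma Zv_pos: "Zv \<sigma> v > 0"
  unfolding Zv_def using q1 pp_pos by (intro sum_pos) auto

lemma upd_in: "\<sigma> \<in> Om \<Longrightarrow> v \<in> V \<Longrightarrow> l \<in> {1..q} \<Longrightarrow> \<sigma>(v := l) \<in> Om"
  unfolding potts_states_def by (auto simp: PiE_iff extensional_def)

lemma Sn_img: "Sn \<sigma> v = (\<lambda>l. \<sigma>(v := l)) ` {1..q}" unfolding Sn_def by auto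

lemma Sn_sub: "\<sigma> \<in> Om \<Longrightarrow> v \<in> V \<Longrightarrow> Sn \<sigma> v \<subseteq> Om" unfolding Sn_img using upd_in by auto

lemma inj_upd: "inj_on (\<lambda>l. \<sigma>(v := l)) A"
  unfolding inj_on_def by (metis fun_upd_same)

lemma sum_Sn: "\<sigma> \<in> Om \<Longrightarrow> v \<in> V \<Longrightarrow>
   (\<Sum>\<tau>\<in>Om. if \<tau> \<in> Sn \<sigma> v then G \<tau> else 0) = (\<Sum>l\<in>{1..q}. G (\<sigma>(v := l)))"
proof -
  assume s: "\<sigma> \<in> Om" and v: "v \<in> V"
  have "(\<Sum>\<tau>\<in>Om. if \<tau> \<in> Sn \<sigma> v then G \<tau> else 0) = sum G (Om \<inter> Sn \<sigma> v)"
    by (rule sum.inter_restrict[OF finOm, symmetric])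
  also have "Om \<inter> Sn \<sigma> v = Sn \<sigma> v" using Sn_sub[OF s v] by blast
  also have "sum G (Sn \<sigma> v) = (\<Sum>l\<in>{1..q}. G (\<sigma>(v := l)))"
    unfolding Sn_img by (rule sum.reindex[OF inj_upd, unfolded comp_def])
  finally show ?thesis .
qed

lemma PHB_eq: "PHB \<sigma> \<tau> = (1 / real (card V)) * (\<Sum>v\<in>V. if \<tau> \<in> Sn \<sigma> v then pp \<tau> / Zv \<sigma> v else 0)"
  unfolding P_HB_def Sn_def Zv_def ..

lemma HB_sum:
  assumes s: "\<sigma> \<in> Om"
  shows "(\<Sum>\<tau>\<in>Om. PHB \<sigma> \<tau> * h \<tau>) =
     (1 / real (card V)) * (\<Sum>v\<in>V. \<Sum>l\<in>{1..q}. pp (\<sigma>(v := l)) / Zv \<sigma> v * h (\<sigma>(v := l)))"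
proof -
  have "(\<Sum>\<tau>\<in>Om. PHB \<sigma> \<tau> * h \<tau>) =
      (\<Sum>\<tau>\<in>Om. (1 / real (card V)) * (\<Sum>v\<in>V. if \<tau> \<in> Sn \<sigma> v then pp \<tau> / Zv \<sigma> v * h \<tau> else 0))"
  proof (rule sum.cong[OF refl])
    fix \<tau>
    have "(\<Sum>v\<in>V. if \<tau> \<in> Sn \<sigma> v then pp \<tau> / Zv \<sigma> v else 0) * h \<tau>
        = (\<Sum>v\<in>V. (if \<tau> \<in> Sn \<sigma> v then pp \<tau> / Zv \<sigma> v else 0) * h \<tau>)"
      by (rule sum_distrib_right)
    also have "\<dots> = (\<Sum>v\<in>V. if \<tau> \<in> Sn \<sigma> v then pp \<tau> / Zv \<sigma> v * h \<tau> else 0)"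
      by (intro sum.cong refl) simp
    finally show "PHB \<sigma> \<tau> * h \<tau> = 1 / real (card V) * (\<Sum>v\<in>V. if \<tau> \<in> Sn \<sigma> v then pp \<tau> / Zv \<sigma> v * h \<tau> else 0)"
      unfolding PHB_eq by (simp only: mult.assoc)
  qed
  also have "\<dots> = (1 / real (card V)) * (\<Sum>v\<in>V. \<Sum>\<tau>\<in>Om. if \<tau> \<in> Sn \<sigma> v then pp \<tau> / Zv \<sigma> v * h \<tau> else 0)"
    by (simp only: sum_distrib_left[symmetric] sum.swap[of _ Om V])
  also have "\<dots> = (1 / real (card V)) * (\<Sum>v\<in>V. \<Sum>l\<in>{1..q}. pp (\<sigma>(v := l)) / Zv \<sigma> v * h (\<sigma>(v := l)))"
  proof -
    have "(\<Sum>\<tau>\<in>Om. if \<tau> \<in> Sn \<sigma> v then pp \<tau> / Zv \<sigma> v * h \<tau> else 0)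
        = (\<Sum>l\<in>{1..q}. pp (\<sigma>(v := l)) / Zv \<sigma> v * h (\<sigma>(v := l)))" if v: "v \<in> V" for v
      by (rule sum_Sn[OF s v])
    then show ?thesis by (intro arg_cong[where f="(*) _"] sum.cong refl) simp
  qed
  finally show ?thesis .
qed

lemma Sn_sym:
  assumes s: "\<sigma> \<in> Om" and t: "\<tau> \<in> Om" and v: "v \<in> V" and m: "\<tau> \<in> Sn \<sigma> v"
  shows "\<sigma> \<in> Sn \<tau> v" and "Zv \<sigma> v = Zv \<tau> v"
proof -
  obtain l where l: "\<tau> = \<sigma>(v := l)" "l \<in> {1..q}" using m unfolding Sn_def by blast
  have "\<sigma> v \<in> {1..q}" using s v unfolding potts_states_def by auto
  moreover have "\<sigma> = \<tau>(v := \<sigma> v)" using l by simp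
  ultimately show "\<sigma> \<in> Sn \<tau> v" unfolding Sn_def by blast
  show "Zv \<sigma> v = Zv \<tau> v" unfolding Zv_def l(1) by simp
qed

lemma card_V_pos: "card V > 0" using fV Vne by (simp add: card_gt_0_iff)

end

sublocale potts \<subseteq> HB: rchain "potts_states V q" "potts_pi V E ends q \<beta>" "P_HB V E ends q \<beta>"
proof
  show "finite Om" by (rule finOm)
  show "\<And>s. s \<in> Om \<Longrightarrow> 0 < pp s" using pp_pos by simp
  show "pp s * PHB s t = pp t * PHB t s" if s: "s \<in> Om" and t: "t \<in> Om" for s t
  proof -
    have "pp s * (if t \<in> Sn s v then pp t / Zv s v else 0) = pp t * (if s \<in> Sn t v then pp s / Zv t v else 0)"
      if v: "v \<in> V" for v
    proof (cases "t \<in> Sn s v")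
      case True
      then show ?thesis using Sn_sym[OF s t v True] by simp
    next
      case False
      then have "s \<notin> Sn t v" using Sn_sym[OF t s v] by blast
      then show ?thesis using False by simp
    qed
    then show ?thesis unfolding PHB_eq by (simp add: sum_distrib_left mult.left_commute)
  qed
  show "\<And>s t. s \<in> Om \<Longrightarrow> t \<in> Om \<Longrightarrow> 0 \<le> PHB s t"
    unfolding PHB_eq using pp_nn Zv_pos card_V_pos by (auto intro!: sum_nonneg mult_nonneg_nonneg divide_nonneg_pos)
  show "(\<Sum>t\<in>Om. PHB s t) = 1" if s: "s \<in> Om" for s
  proof -
    have "(\<Sum>t\<in>Om. PHB s t) = (\<Sum>t\<in>Om. PHB s t * 1)" by simp
    also have "\<dots> = (1 / real (card V)) * (\<Sum>v\<in>V. \<Sum>l\<in>{1..q}. pp (s(v := l)) / Zv s v * 1)"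
      by (rule HB_sum[OF s])
    also have "\<dots> = (1 / real (card V)) * (\<Sum>v\<in>V. 1)"
    proof -
      have "(\<Sum>l\<in>{1..q}. pp (s(v := l)) / Zv s v * 1) = 1" for v
        using Zv_pos[of s v] unfolding Zv_def by (simp add: sum_divide_distrib[symmetric])
      then show ?thesis by simp
    qed
    also have "\<dots> = 1" using card_V_pos by simp
    finally show ?thesis .
  qed
qed

context potts begin

definition GHB where "GHB x \<sigma> v = (\<Sum>l\<in>{1..q}. pp (\<sigma>(v := l)) / Zv \<sigma> v * (x \<sigma> - x (\<sigma>(v := l)))^2)"

lemma GHB_nn: "GHB x \<sigma> v \<ge> 0"
  unfolding GHB_def using pp_nn Zv_pos by (intro sum_nonneg mult_nonneg_nonneg divide_nonneg_pos) auto

lemma HB_Dir: "HB.Dir x = (\<Sum>\<sigma>\<in>Om. pp \<sigma> * ((1 / real (card V)) * (\<Sum>v\<in>V. GHB x \<sigma> v))) / 2"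
proof -
  have "(\<Sum>t\<in>Om. pp s * PHB s t * (x s - x t)^2) = pp s * ((1 / real (card V)) * (\<Sum>v\<in>V. GHB x s v))"
    if s: "s \<in> Om" for s
  proof -
    have "(\<Sum>t\<in>Om. pp s * PHB s t * (x s - x t)^2) = pp s * (\<Sum>t\<in>Om. PHB s t * (x s - x t)^2)"
      by (simp add: sum_distrib_left mult.assoc)
    also have "(\<Sum>t\<in>Om. PHB s t * (x s - x t)^2) = (1 / real (card V)) * (\<Sum>v\<in>V. GHB x s v)"
      unfolding GHB_def by (rule HB_sum[OF s])
    finally show ?thesis .
  qed
  then show ?thesis unfolding HB.Dir_def by (intro arg_cong[where f="\<lambda>z. z / 2"] sum.cong refl) simp
qed

lemma HB_erg_step:
  assumes D: "HB.Dir x = 0" and s: "\<sigma> \<in> Om" and v: "v \<in> V" and l: "l \<in> {1..q}"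
  shows "x \<sigma> = x (\<sigma>(v := l))"
proof -
  define F where "F \<sigma> = pp \<sigma> * ((1 / real (card V)) * (\<Sum>v\<in>V. GHB x \<sigma> v))" for \<sigma>
  have Fnn: "F \<sigma> \<ge> 0" for \<sigma> unfolding F_def using pp_nn GHB_nn
    by (intro mult_nonneg_nonneg sum_nonneg) auto
  have "sum F Om = 0" using D unfolding HB_Dir F_def by simp
  then have "F \<sigma> = 0" using sum_nonneg_eq_0_iff[OF finOm, of F] Fnn s by auto
  then have "(\<Sum>v\<in>V. GHB x \<sigma> v) = 0" unfolding F_def using pp_pos[of \<sigma>] card_V_pos by simp
  then have "GHB x \<sigma> v = 0" using sum_nonneg_eq_0_iff[OF fV, of "GHB x \<sigma>"] GHB_nn v by auto
  define T where "T l = pp (\<sigma>(v := l)) / Zv \<sigma> v * (x \<sigma> - x (\<sigma>(v := l)))^2" for l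
  have Tnn: "0 \<le> T l" for l
  proof -
    have "0 \<le> pp (\<sigma>(v := l)) / Zv \<sigma> v" using pp_nn Zv_pos[of \<sigma> v] by simp
    moreover have "0 \<le> (x \<sigma> - x (\<sigma>(v := l)))^2" by simp
    ultimately show ?thesis unfolding T_def by (rule mult_nonneg_nonneg)
  qed
  have "sum T {1..q} = 0" using \<open>GHB x \<sigma> v = 0\<close> unfolding GHB_def T_def .
  then have "T l = 0" using sum_nonneg_eq_0_iff[of "{1..q}" T] Tnn l by simp
  then have "pp (\<sigma>(v := l)) / Zv \<sigma> v * (x \<sigma> - x (\<sigma>(v := l)))^2 = 0" unfolding T_def .
  then show ?thesis using pp_pos[of "\<sigma>(v := l)"] Zv_pos[of \<sigma> v] by simp
qed

lemma sum_pp: "(\<Sum>\<sigma>\<in>Om. pp \<sigma>) = 1"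
  unfolding potts_pi_def using Zp_pos by (simp add: sum_divide_distrib[symmetric] potts_Z_def)

lemma HB_erg:
  assumes m: "HB.mean x = 0" and D: "HB.Dir x = 0"
  shows "\<forall>s\<in>Om. x s = 0"
proof -
  define s1 where "s1 = (\<lambda>v\<in>V. 1::nat)"
  have s1: "s1 \<in> Om" unfolding s1_def by (rule one_in)
  define Dif where "Dif \<sigma> = {v\<in>V. \<sigma> v \<noteq> s1 v}" for \<sigma>
  have fD: "finite (Dif \<sigma>)" for \<sigma> unfolding Dif_def using fV by simp
  have key: "\<forall>\<sigma>\<in>Om. card (Dif \<sigma>) = n \<longrightarrow> x \<sigma> = x s1" for n
  proof (induction n)
    case 0
    show ?case
    proof (intro ballI impI)
      fix \<sigma> assume s: "\<sigma> \<in> Om" and c: "card (Dif \<sigma>) = 0"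
      then have "Dif \<sigma> = {}" using fD by simp
      then have "\<sigma> = s1"
      proof -
        assume e: "Dif \<sigma> = {}"
        show "\<sigma> = s1"
        proof
          fix v show "\<sigma> v = s1 v"
          proof (cases "v \<in> V")
            case True then show ?thesis using e unfolding Dif_def by blast
          next
            case False then show ?thesis using s s1 unfolding potts_states_def by (auto simp: PiE_def extensional_def)
          qed
        qed
      qed
      then show "x \<sigma> = x s1" by simp
    qed
  next
    case (Suc n)
    show ?case
    proof (intro ballI impI)
      fix \<sigma> assume s: "\<sigma> \<in> Om" and c: "card (Dif \<sigma>) = Suc n"
      then obtain v where v: "v \<in> Dif \<sigma>" by (metis card.empty ex_in_conv nat.distinct(1))
      then have vV: "v \<in> V" unfolding Dif_def by simp
      define \<sigma>' where "\<sigma>' = \<sigma>(v := 1)"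
      have s': "\<sigma>' \<in> Om" unfolding \<sigma>'_def using upd_in[OF s vV] q1 by simp
      have "Dif \<sigma>' = Dif \<sigma> - {v}" unfolding Dif_def \<sigma>'_def s1_def using vV by auto
      then have "card (Dif \<sigma>') = n" using c v fD by simp
      then have "x \<sigma>' = x s1" using Suc.IH s' by blast
      moreover have "x \<sigma> = x \<sigma>'" unfolding \<sigma>'_def using HB_erg_step[OF D s vV] q1 by simp
      ultimately show "x \<sigma> = x s1" by simp
    qed
  qed
  have const: "x \<sigma> = x s1" if "\<sigma> \<in> Om" for \<sigma> using key that by blast
  have "HB.mean x = (\<Sum>\<sigma>\<in>Om. pp \<sigma> * x s1)" unfolding HB.mean_def by (intro sum.cong refl) (simp add: const)
  also have "\<dots> = x s1" using sum_pp by (simp add: sum_distrib_right[symmetric])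
  finally have "x s1 = 0" using m by simp
  then show ?thesis using const by simp
qed

end

lemma lagrange2:
  fixes a b :: "'i \<Rightarrow> real"
  assumes fI: "finite I"
  shows "(\<Sum>i\<in>I. \<Sum>j\<in>I. (a i - a j)^2) + (\<Sum>i\<in>I. \<Sum>j\<in>I. (b i - b j)^2)
         \<le> 2 * (\<Sum>i\<in>I. \<Sum>j\<in>I. (a i - b j)^2)"
proof -
  define n where "n = real (card I)"
  define sa where "sa = sum a I"
  define sb where "sb = sum b I"
  define qa where "qa = (\<Sum>i\<in>I. (a i)^2)"
  define qb where "qb = (\<Sum>i\<in>I. (b i)^2)"
  have g: "(\<Sum>i\<in>I. \<Sum>j\<in>I. (c i - d j)^2) = n * (\<Sum>i\<in>I. (c i)^2) + n * (\<Sum>j\<in>I. (d j)^2) - 2 * (sum c I) * (sum d I)"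
    for c d :: "'i \<Rightarrow> real"
  proof -
    have p1: "(\<Sum>i\<in>I. \<Sum>j\<in>I. (c i)^2) = n * (\<Sum>i\<in>I. (c i)^2)" unfolding n_def by (simp add: sum_distrib_left)
    have p2: "(\<Sum>i\<in>I. \<Sum>j\<in>I. (d j)^2) = n * (\<Sum>j\<in>I. (d j)^2)" unfolding n_def by simp
    have p3: "(\<Sum>i\<in>I. \<Sum>j\<in>I. c i * d j) = sum c I * sum d I" by (rule sum_product[symmetric])
    have "(\<Sum>i\<in>I. \<Sum>j\<in>I. (c i - d j)^2) = (\<Sum>i\<in>I. \<Sum>j\<in>I. (c i)^2 + (d j)^2 - 2 * (c i * d j))"
      by (simp add: power2_diff mult.assoc)
    also have "\<dots> = (\<Sum>i\<in>I. \<Sum>j\<in>I. (c i)^2) + (\<Sum>i\<in>I. \<Sum>j\<in>I. (d j)^2) - 2 * (\<Sum>i\<in>I. \<Sum>j\<in>I. c i * d j)"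
      by (simp only: sum.distrib sum_subtractf sum_distrib_left)
    finally show ?thesis unfolding p1 p2 p3 by simp
  qed
  have "2 * (\<Sum>i\<in>I. \<Sum>j\<in>I. (a i - b j)^2) - ((\<Sum>i\<in>I. \<Sum>j\<in>I. (a i - a j)^2) + (\<Sum>i\<in>I. \<Sum>j\<in>I. (b i - b j)^2))
        = 2 * (sa - sb)^2"
    unfolding g sa_def[symmetric] sb_def[symmetric] by (simp add: power2_eq_square algebra_simps)
  then show ?thesis by (smt (verit) zero_le_power2)
qed

context potts begin

definition Dl :: nat where "Dl = max_deg V E ends"
definition dv where "dv v = {e \<in> E. v \<in> ends e}"
definition Sv where "Sv \<sigma> v = monE \<sigma> - dv v"
definition Kv where "Kv \<sigma> \<tau> v = (\<Sum>A\<in>Pow (Sv \<sigma> v \<inter> Sv \<tau> v). wA A)"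

lemma deg_le: "v \<in> V \<Longrightarrow> card (dv v) \<le> Dl"
  unfolding Dl_def max_deg_def dv_def deg_def[symmetric] using fV by (intro Max_ge) auto

lemma Sv_upd: "Sv (\<sigma>(v := l)) v = Sv \<sigma> v"
proof -
  have "e \<in> monE (\<sigma>(v := l)) \<longleftrightarrow> e \<in> monE \<sigma>" if "e \<notin> dv v" for e
  proof (cases "e \<in> E")
    case True
    then have "v \<notin> ends e" using that unfolding dv_def by simp
    then have "(\<sigma>(v := l)) ` ends e = \<sigma> ` ends e" by (intro image_cong) auto
    then show ?thesis unfolding mono_edges_def by simp
  next
    case False then show ?thesis unfolding mono_edges_def by simp
  qed
  then show ?thesis unfolding Sv_def by blast
qed

lemma card_mon_le: "v \<in> V \<Longrightarrow> card (monE \<sigma>) \<le> card (Sv \<sigma> v) + Dl"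
proof -
  assume v: "v \<in> V"
  have "monE \<sigma> \<subseteq> Sv \<sigma> v \<union> dv v" unfolding Sv_def by blast
  then have "card (monE \<sigma>) \<le> card (Sv \<sigma> v \<union> dv v)"
    by (rule card_mono[rotated]) (use fE in \<open>auto simp: Sv_def dv_def mono_edges_def\<close>)
  also have "\<dots> \<le> card (Sv \<sigma> v) + card (dv v)" by (rule card_Un_le)
  finally show ?thesis using deg_le[OF v] by simp
qed

lemma Sv_sub: "Sv \<sigma> v \<subseteq> monE \<sigma>" unfolding Sv_def by blast

lemma Kv_le: "Kv \<sigma> \<tau> v \<le> KS \<sigma> \<tau>"
proof -
  have fin: "finite (Pow (monE \<sigma> \<inter> monE \<tau>))" using mono_sub fE finite_subset by blast
  have sub: "Pow (Sv \<sigma> v \<inter> Sv \<tau> v) \<subseteq> Pow (monE \<sigma> \<inter> monE \<tau>)" using Sv_sub by blast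
  show ?thesis unfolding Kv_def KS_def by (rule sum_mono2[OF fin sub]) (simp add: wA_nn)
qed

lemma Kv_nn: "Kv \<sigma> \<tau> v \<ge> 0" unfolding Kv_def by (intro sum_nonneg wA_nn)
lemma Kv_sym: "Kv \<sigma> \<tau> v = Kv \<tau> \<sigma> v" unfolding Kv_def by (simp add: Int_commute)
lemma Kv_upd: "Kv (\<sigma>(v := l)) (\<tau>(v := l')) v = Kv \<sigma> \<tau> v" unfolding Kv_def Sv_upd ..

definition Rv where "Rv \<sigma> v = (\<Sum>\<tau>\<in>Om. Kv \<sigma> \<tau> v)"

lemma Rv_eq: "Rv \<sigma> v = exp (\<beta> * real (card (Sv \<sigma> v)))"
proof -
  have "Rv \<sigma> v = (\<Sum>\<tau>\<in>Om. \<Sum>A\<in>{A. A \<in> Pow (Sv \<sigma> v) \<and> A \<subseteq> monE \<tau>}. wA A)"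
    unfolding Rv_def Kv_def
    by (intro sum.cong refl arg_cong[where f="\<lambda>S. sum wA S"]) (auto simp: Sv_def)
  also have "\<dots> = exp (\<beta> * real (card (Sv \<sigma> v)))"
    by (rule colsum) (use Sv_sub mono_sub in blast)
  finally show ?thesis .
qed

lemma Rv_upd: "Rv (\<sigma>(v := l)) v = Rv \<sigma> v" unfolding Rv_eq Sv_upd ..

lemma Rv_ge: "v \<in> V \<Longrightarrow> Rv \<sigma> v \<ge> exp (- (\<beta> * Dl)) * (Zp * pp \<sigma>)"
proof -
  assume v: "v \<in> V"
  have "\<beta> * real (card (monE \<sigma>)) - \<beta> * Dl \<le> \<beta> * real (card (Sv \<sigma> v))"
    using card_mon_le[OF v, of \<sigma>] bnn
    by (metis add_diff_cancel_right' diff_le_eq distrib_left mult_left_mono of_nat_add of_nat_le_iff)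
  then have "exp (\<beta> * real (card (monE \<sigma>)) - \<beta> * Dl) \<le> Rv \<sigma> v" unfolding Rv_eq by simp
  moreover have "exp (\<beta> * real (card (monE \<sigma>)) - \<beta> * Dl) = exp (- (\<beta> * Dl)) * (Zp * pp \<sigma>)"
    unfolding pp_eq using Zp_pos by (simp add: exp_diff exp_minus field_simps)
  ultimately show ?thesis by simp
qed

lemma RI:
  assumes v: "v \<in> V"
  shows "(\<Sum>\<sigma>\<in>Om. \<Sum>l\<in>{1..q}. h (\<sigma>(v := l))) = real q * (\<Sum>\<sigma>\<in>Om. h \<sigma>)"
proof -
  have "(\<Sum>\<sigma>\<in>Om. \<Sum>l\<in>{1..q}. h (\<sigma>(v := l))) = (\<Sum>(\<sigma>, l)\<in>Om \<times> {1..q}. h (\<sigma>(v := l)))"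
    by (rule sum.cartesian_product)
  also have "\<dots> = (\<Sum>(\<sigma>, l)\<in>Om \<times> {1..q}. h \<sigma>)"
  proof (rule sum.reindex_bij_witness[where i="\<lambda>(\<sigma>, l). (\<sigma>(v := l), \<sigma> v)" and j="\<lambda>(\<sigma>, l). (\<sigma>(v := l), \<sigma> v)"])
    fix a assume a: "a \<in> Om \<times> {1..q}"
    obtain \<sigma> l where al: "a = (\<sigma>, l)" by (cases a)
    have s: "\<sigma> \<in> Om" and l: "l \<in> {1..q}" using a al by auto
    have sv: "\<sigma> v \<in> {1..q}" using s v unfolding potts_states_def by auto
    show "(\<lambda>(\<sigma>, l). (\<sigma>(v := l), \<sigma> v)) ((\<lambda>(\<sigma>, l). (\<sigma>(v := l), \<sigma> v)) a) = a" using al by simp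
    show "(\<lambda>(\<sigma>, l). (\<sigma>(v := l), \<sigma> v)) a \<in> Om \<times> {1..q}" using al upd_in[OF s v l] l sv by simp
    show "(\<lambda>(\<sigma>, l). (\<sigma>(v := l), \<sigma> v)) ((\<lambda>(\<sigma>, l). (\<sigma>(v := l), \<sigma> v)) a) = a" using al by simp
    show "(\<lambda>(\<sigma>, l). (\<sigma>(v := l), \<sigma> v)) a \<in> Om \<times> {1..q}" using al upd_in[OF s v l] l sv by simp
    show "(case (\<lambda>(\<sigma>, l). (\<sigma>(v := l), \<sigma> v)) a of (\<sigma>, l) \<Rightarrow> h \<sigma>) = (case a of (\<sigma>, l) \<Rightarrow> h (\<sigma>(v := l)))"
      using al by simp
  qed
  also have "\<dots> = (\<Sum>\<sigma>\<in>Om. \<Sum>l\<in>{1..q}. h \<sigma>)" by (rule sum.cartesian_product[symmetric])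
  also have "\<dots> = real q * (\<Sum>\<sigma>\<in>Om. h \<sigma>)" by (simp add: sum_distrib_left)
  finally show ?thesis .
qed

end

context potts begin

definition Tv where "Tv x v = (\<Sum>\<sigma>\<in>Om. \<Sum>l\<in>{1..q}. pp \<sigma> * (x \<sigma> - x (\<sigma>(v := l)))^2)"

lemma ratio:
  assumes v: "v \<in> V"
  shows "pp (\<sigma>(v := l)) / Zv \<sigma> v \<le> exp (\<beta> * Dl) / real q"
proof -
  have le1: "pp (\<sigma>(v := l)) \<le> exp (\<beta> * Dl) * pp (\<sigma>(v := l'))" for l'
  proof -
    have "card (monE (\<sigma>(v := l))) \<le> card (Sv (\<sigma>(v := l)) v) + Dl" by (rule card_mon_le[OF v])
    also have "Sv (\<sigma>(v := l)) v = Sv (\<sigma>(v := l')) v" unfolding Sv_upd ..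
    finally have c1: "card (monE (\<sigma>(v := l))) \<le> card (Sv (\<sigma>(v := l')) v) + Dl" .
    have c2: "card (Sv (\<sigma>(v := l')) v) \<le> card (monE (\<sigma>(v := l')))"
      by (rule card_mono[OF finite_subset[OF mono_sub fE] Sv_sub])
    have c: "card (monE (\<sigma>(v := l))) \<le> card (monE (\<sigma>(v := l'))) + Dl" using c1 c2 by linarith
    have "\<beta> * real (card (monE (\<sigma>(v := l)))) \<le> \<beta> * real (card (monE (\<sigma>(v := l')))) + \<beta> * Dl"
      using mult_left_mono[OF iffD2[OF of_nat_le_iff c] bnn] by (simp add: distrib_left)
    then have "exp (\<beta> * real (card (monE (\<sigma>(v := l))))) \<le> exp (\<beta> * Dl) * exp (\<beta> * real (card (monE (\<sigma>(v := l')))))"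
      by (simp add: exp_add[symmetric] add.commute)
    then have "exp (\<beta> * real (card (monE (\<sigma>(v := l))))) / Zp \<le> exp (\<beta> * Dl) * exp (\<beta> * real (card (monE (\<sigma>(v := l'))))) / Zp"
      using Zp_pos by (intro divide_right_mono) auto
    then show ?thesis unfolding pp_eq by simp
  qed
  have "real q * (exp (- (\<beta> * Dl)) * pp (\<sigma>(v := l))) = (\<Sum>l'\<in>{1..q}. exp (- (\<beta> * Dl)) * pp (\<sigma>(v := l)))"
    by simp
  also have "\<dots> \<le> Zv \<sigma> v" unfolding Zv_def
  proof (rule sum_mono)
    fix l' show "exp (- (\<beta> * Dl)) * pp (\<sigma>(v := l)) \<le> pp (\<sigma>(v := l'))"
      using le1[of l'] by (simp add: exp_minus field_simps)
  qed
  finally have z: "real q * exp (- (\<beta> * Dl)) * pp (\<sigma>(v := l)) \<le> Zv \<sigma> v" by (simp add: mult.assoc)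
  have "pp (\<sigma>(v := l)) \<le> Zv \<sigma> v * (exp (\<beta> * Dl) / real q)"
  proof -
    have "pp (\<sigma>(v := l)) = (real q * exp (- (\<beta> * Dl)) * pp (\<sigma>(v := l))) * (exp (\<beta> * Dl) / real q)"
      using q1 by (simp add: exp_minus field_simps)
    also have "\<dots> \<le> Zv \<sigma> v * (exp (\<beta> * Dl) / real q)"
      by (rule mult_right_mono[OF z]) simp
    finally show ?thesis .
  qed
  then show ?thesis using Zv_pos[of \<sigma> v] by (simp add: pos_divide_le_eq mult.commute)
qed

lemma C2: "HB.Dir x \<le> exp (\<beta> * Dl) / (2 * real q) * ((1 / real (card V)) * (\<Sum>v\<in>V. Tv x v))"
proof -
  define e where "e = exp (\<beta> * Dl) / real q"
  have G: "GHB x \<sigma> v \<le> e * (\<Sum>l\<in>{1..q}. (x \<sigma> - x (\<sigma>(v := l)))^2)" if v: "v \<in> V" for \<sigma> v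
    unfolding GHB_def e_def sum_distrib_left
    by (rule sum_mono) (rule mult_right_mono[OF ratio[OF v]], simp)
  have "HB.Dir x = (\<Sum>\<sigma>\<in>Om. pp \<sigma> * ((1 / real (card V)) * (\<Sum>v\<in>V. GHB x \<sigma> v))) / 2" by (rule HB_Dir)
  also have "\<dots> \<le> (\<Sum>\<sigma>\<in>Om. pp \<sigma> * ((1 / real (card V)) * (\<Sum>v\<in>V. e * (\<Sum>l\<in>{1..q}. (x \<sigma> - x (\<sigma>(v := l)))^2)))) / 2"
  proof -
    have "(\<Sum>\<sigma>\<in>Om. pp \<sigma> * ((1 / real (card V)) * (\<Sum>v\<in>V. GHB x \<sigma> v)))
       \<le> (\<Sum>\<sigma>\<in>Om. pp \<sigma> * ((1 / real (card V)) * (\<Sum>v\<in>V. e * (\<Sum>l\<in>{1..q}. (x \<sigma> - x (\<sigma>(v := l)))^2))))"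
    proof (rule sum_mono)
      fix \<sigma>
      have "(\<Sum>v\<in>V. GHB x \<sigma> v) \<le> (\<Sum>v\<in>V. e * (\<Sum>l\<in>{1..q}. (x \<sigma> - x (\<sigma>(v := l)))^2))"
        by (rule sum_mono) (rule G)
      then show "pp \<sigma> * ((1 / real (card V)) * (\<Sum>v\<in>V. GHB x \<sigma> v))
          \<le> pp \<sigma> * ((1 / real (card V)) * (\<Sum>v\<in>V. e * (\<Sum>l\<in>{1..q}. (x \<sigma> - x (\<sigma>(v := l)))^2)))"
        using pp_nn by (intro mult_left_mono) auto
    qed
    then show ?thesis by simp
  qed
  also have "\<dots> = e / 2 * ((1 / real (card V)) * (\<Sum>v\<in>V. Tv x v))"
  proof -
    have "(\<Sum>\<sigma>\<in>Om. pp \<sigma> * ((1 / real (card V)) * (\<Sum>v\<in>V. e * (\<Sum>l\<in>{1..q}. (x \<sigma> - x (\<sigma>(v := l)))^2))))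
        = e * (1 / real (card V)) * (\<Sum>\<sigma>\<in>Om. \<Sum>v\<in>V. \<Sum>l\<in>{1..q}. pp \<sigma> * (x \<sigma> - x (\<sigma>(v := l)))^2)"
      by (simp add: sum_distrib_left mult_ac)
    also have "(\<Sum>\<sigma>\<in>Om. \<Sum>v\<in>V. \<Sum>l\<in>{1..q}. pp \<sigma> * (x \<sigma> - x (\<sigma>(v := l)))^2) = (\<Sum>v\<in>V. Tv x v)"
      unfolding Tv_def by (rule sum.swap)
    finally have eq: "(\<Sum>\<sigma>\<in>Om. pp \<sigma> * ((1 / real (card V)) * (\<Sum>v\<in>V. e * (\<Sum>l\<in>{1..q}. (x \<sigma> - x (\<sigma>(v := l)))^2))))
        = e * (1 / real (card V)) * (\<Sum>v\<in>V. Tv x v)" .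
    show ?thesis unfolding eq by simp
  qed
  finally show ?thesis unfolding e_def by simp
qed

lemma C1:
  assumes v: "v \<in> V"
  shows "exp (- (\<beta> * Dl)) / (2 * real q) * Tv x v \<le> SW.Dir x"
proof -
  define d where "d \<sigma> \<tau> = (x \<sigma> - x \<tau>)^2" for \<sigma> \<tau>
  define Y where "Y = (\<Sum>\<sigma>\<in>Om. \<Sum>\<tau>\<in>Om. Kv \<sigma> \<tau> v * d \<sigma> \<tau>)"
  define X where "X \<sigma> = (\<Sum>l\<in>{1..q}. \<Sum>l'\<in>{1..q}. d (\<sigma>(v := l)) (\<sigma>(v := l')))" for \<sigma>
  define Ww where "Ww \<sigma> \<tau> = (\<Sum>l\<in>{1..q}. \<Sum>l'\<in>{1..q}. d (\<sigma>(v := l)) (\<tau>(v := l')))" for \<sigma> \<tau>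
  define H where "H \<sigma> = (\<Sum>\<tau>\<in>Om. Kv \<sigma> \<tau> v * d \<sigma> \<tau>)" for \<sigma>
  have dnn: "0 \<le> d \<sigma> \<tau>" for \<sigma> \<tau> unfolding d_def by simp
  have qpos: "real q > 0" using q1 by simp
  have a1: "Y / Zp \<le> (\<Sum>\<sigma>\<in>Om. \<Sum>\<tau>\<in>Om. pp \<sigma> * PSW \<sigma> \<tau> * (x \<sigma> - x \<tau>)^2)"
    unfolding Y_def sum_divide_distrib
  proof (intro sum_mono)
    fix \<sigma> \<tau>
    have "Kv \<sigma> \<tau> v * d \<sigma> \<tau> \<le> KS \<sigma> \<tau> * d \<sigma> \<tau>" by (rule mult_right_mono[OF Kv_le dnn])
    then have "Kv \<sigma> \<tau> v * d \<sigma> \<tau> / Zp \<le> KS \<sigma> \<tau> * d \<sigma> \<tau> / Zp" using Zp_pos by (intro divide_right_mono) auto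
    also have "KS \<sigma> \<tau> * d \<sigma> \<tau> / Zp = pp \<sigma> * PSW \<sigma> \<tau> * (x \<sigma> - x \<tau>)^2"
      unfolding Ksw d_def by simp
    finally show "Kv \<sigma> \<tau> v * d \<sigma> \<tau> / Zp \<le> pp \<sigma> * PSW \<sigma> \<tau> * (x \<sigma> - x \<tau>)^2" .
  qed
  have a: "Y / (2 * Zp) \<le> SW.Dir x" using a1 unfolding SW.Dir_def by simp
  have b1: "(\<Sum>\<sigma>\<in>Om. \<Sum>l\<in>{1..q}. H (\<sigma>(v := l))) = real q * Y"
  proof -
    have "Y = (\<Sum>\<sigma>\<in>Om. H \<sigma>)" unfolding Y_def H_def ..
    then show ?thesis using RI[OF v, of H] by simp
  qed
  have b2: "real q * H (\<sigma>(v := l)) = (\<Sum>\<tau>\<in>Om. \<Sum>l'\<in>{1..q}. Kv \<sigma> \<tau> v * d (\<sigma>(v := l)) (\<tau>(v := l')))" for \<sigma> l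
  proof -
    have "(\<Sum>\<tau>\<in>Om. \<Sum>l'\<in>{1..q}. Kv (\<sigma>(v := l)) (\<tau>(v := l')) v * d (\<sigma>(v := l)) (\<tau>(v := l')))
        = real q * H (\<sigma>(v := l))"
      unfolding H_def by (rule RI[OF v])
    then show ?thesis unfolding Kv_upd by simp
  qed
  have b: "real q * real q * Y = (\<Sum>\<sigma>\<in>Om. \<Sum>\<tau>\<in>Om. Kv \<sigma> \<tau> v * Ww \<sigma> \<tau>)"
  proof -
    have "real q * real q * Y = real q * (\<Sum>\<sigma>\<in>Om. \<Sum>l\<in>{1..q}. H (\<sigma>(v := l)))" unfolding b1 by simp
    also have "\<dots> = (\<Sum>\<sigma>\<in>Om. \<Sum>l\<in>{1..q}. real q * H (\<sigma>(v := l)))" by (simp only: sum_distrib_left)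
    also have "\<dots> = (\<Sum>\<sigma>\<in>Om. \<Sum>l\<in>{1..q}. \<Sum>\<tau>\<in>Om. \<Sum>l'\<in>{1..q}. Kv \<sigma> \<tau> v * d (\<sigma>(v := l)) (\<tau>(v := l')))"
      unfolding b2 ..
    also have "\<dots> = (\<Sum>\<sigma>\<in>Om. \<Sum>\<tau>\<in>Om. \<Sum>l\<in>{1..q}. \<Sum>l'\<in>{1..q}. Kv \<sigma> \<tau> v * d (\<sigma>(v := l)) (\<tau>(v := l')))"
      by (intro sum.cong refl sum.swap)
    also have "\<dots> = (\<Sum>\<sigma>\<in>Om. \<Sum>\<tau>\<in>Om. Kv \<sigma> \<tau> v * Ww \<sigma> \<tau>)"
      unfolding Ww_def by (simp only: sum_distrib_left)
    finally show ?thesis .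
  qed
  have lg: "X \<sigma> + X \<tau> \<le> 2 * Ww \<sigma> \<tau>" for \<sigma> \<tau>
    unfolding X_def Ww_def d_def
    using lagrange2[of "{1..q}" "\<lambda>l. x (\<sigma>(v := l))" "\<lambda>l. x (\<tau>(v := l))"] by simp
  have c1: "(\<Sum>\<sigma>\<in>Om. \<Sum>\<tau>\<in>Om. Kv \<sigma> \<tau> v * (X \<sigma> + X \<tau>)) \<le> 2 * (\<Sum>\<sigma>\<in>Om. \<Sum>\<tau>\<in>Om. Kv \<sigma> \<tau> v * Ww \<sigma> \<tau>)"
    unfolding sum_distrib_left
    by (intro sum_mono) (use mult_left_mono[OF lg Kv_nn] in \<open>simp add: mult_ac\<close>)
  have c2: "(\<Sum>\<sigma>\<in>Om. \<Sum>\<tau>\<in>Om. Kv \<sigma> \<tau> v * X \<tau>) = (\<Sum>\<sigma>\<in>Om. \<Sum>\<tau>\<in>Om. Kv \<sigma> \<tau> v * X \<sigma>)"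
  proof -
    have "(\<Sum>\<sigma>\<in>Om. \<Sum>\<tau>\<in>Om. Kv \<sigma> \<tau> v * X \<tau>) = (\<Sum>\<tau>\<in>Om. \<Sum>\<sigma>\<in>Om. Kv \<sigma> \<tau> v * X \<tau>)" by (rule sum.swap)
    also have "\<dots> = (\<Sum>\<tau>\<in>Om. \<Sum>\<sigma>\<in>Om. Kv \<tau> \<sigma> v * X \<tau>)" by (simp only: Kv_sym)
    finally show ?thesis .
  qed
  have c: "(\<Sum>\<sigma>\<in>Om. \<Sum>\<tau>\<in>Om. Kv \<sigma> \<tau> v * X \<sigma>) \<le> real q * real q * Y"
  proof -
    have "(\<Sum>\<sigma>\<in>Om. \<Sum>\<tau>\<in>Om. Kv \<sigma> \<tau> v * (X \<sigma> + X \<tau>))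
        = (\<Sum>\<sigma>\<in>Om. \<Sum>\<tau>\<in>Om. Kv \<sigma> \<tau> v * X \<sigma>) + (\<Sum>\<sigma>\<in>Om. \<Sum>\<tau>\<in>Om. Kv \<sigma> \<tau> v * X \<tau>)"
      by (simp only: distrib_left sum.distrib)
    then show ?thesis using c1 c2 b by linarith
  qed
  have dd: "(\<Sum>\<sigma>\<in>Om. \<Sum>\<tau>\<in>Om. Kv \<sigma> \<tau> v * X \<sigma>) = real q * (\<Sum>\<sigma>\<in>Om. Rv \<sigma> v * (\<Sum>l\<in>{1..q}. d \<sigma> (\<sigma>(v := l))))"
  proof -
    have "(\<Sum>\<sigma>\<in>Om. \<Sum>\<tau>\<in>Om. Kv \<sigma> \<tau> v * X \<sigma>) = (\<Sum>\<sigma>\<in>Om. Rv \<sigma> v * X \<sigma>)"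
      unfolding Rv_def by (simp only: sum_distrib_right)
    also have "\<dots> = (\<Sum>\<sigma>\<in>Om. \<Sum>l\<in>{1..q}. Rv (\<sigma>(v := l)) v * (\<Sum>l'\<in>{1..q}. d (\<sigma>(v := l)) ((\<sigma>(v := l))(v := l'))))"
      unfolding Rv_upd fun_upd_upd X_def by (simp only: sum_distrib_left)
    also have "\<dots> = real q * (\<Sum>\<sigma>\<in>Om. Rv \<sigma> v * (\<Sum>l\<in>{1..q}. d \<sigma> (\<sigma>(v := l))))"
      by (rule RI[OF v])
    finally show ?thesis .
  qed
  have e: "exp (- (\<beta> * Dl)) * Zp * Tv x v \<le> (\<Sum>\<sigma>\<in>Om. Rv \<sigma> v * (\<Sum>l\<in>{1..q}. d \<sigma> (\<sigma>(v := l))))"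
  proof -
    have "exp (- (\<beta> * Dl)) * Zp * Tv x v = (\<Sum>\<sigma>\<in>Om. (exp (- (\<beta> * Dl)) * (Zp * pp \<sigma>)) * (\<Sum>l\<in>{1..q}. d \<sigma> (\<sigma>(v := l))))"
      unfolding Tv_def d_def by (simp add: sum_distrib_left mult_ac)
    also have "\<dots> \<le> (\<Sum>\<sigma>\<in>Om. Rv \<sigma> v * (\<Sum>l\<in>{1..q}. d \<sigma> (\<sigma>(v := l))))"
      by (intro sum_mono mult_right_mono Rv_ge[OF v] sum_nonneg dnn)
    finally show ?thesis .
  qed
  have "real q * (exp (- (\<beta> * Dl)) * Zp * Tv x v) \<le> real q * (real q * Y)"
    using mult_left_mono[OF e, of "real q"] dd c by simp
  then have f: "exp (- (\<beta> * Dl)) * Zp * Tv x v \<le> real q * Y" using qpos by simp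
  have "exp (- (\<beta> * Dl)) / (2 * real q) * Tv x v = (exp (- (\<beta> * Dl)) * Zp * Tv x v) / (2 * real q * Zp)"
    using Zp_pos qpos by (simp add: field_simps)
  also have "\<dots> \<le> (real q * Y) / (2 * real q * Zp)"
    using f Zp_pos qpos by (intro divide_right_mono) auto
  also have "\<dots> = Y / (2 * Zp)" using qpos by simp
  finally show ?thesis using a by simp
qed

lemma compare: "HB.Dir x \<le> exp (2 * (\<beta> * Dl)) * SW.Dir x"
proof -
  have T: "Tv x v \<le> 2 * real q * exp (\<beta> * Dl) * SW.Dir x" if v: "v \<in> V" for v
  proof -
    have "exp (- (\<beta> * Dl)) / (2 * real q) * Tv x v \<le> SW.Dir x" by (rule C1[OF v])
    then have "exp (\<beta> * Dl) * (2 * real q) * (exp (- (\<beta> * Dl)) / (2 * real q) * Tv x v) \<le> exp (\<beta> * Dl) * (2 * real q) * SW.Dir x"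
      using q1 by (intro mult_left_mono) auto
    moreover have "exp (\<beta> * Dl) * (2 * real q) * (exp (- (\<beta> * Dl)) / (2 * real q) * Tv x v) = Tv x v"
      using q1 by (simp add: exp_minus field_simps)
    ultimately show ?thesis by (simp add: mult_ac)
  qed
  have "HB.Dir x \<le> exp (\<beta> * Dl) / (2 * real q) * ((1 / real (card V)) * (\<Sum>v\<in>V. Tv x v))" by (rule C2)
  also have "\<dots> \<le> exp (\<beta> * Dl) / (2 * real q) * ((1 / real (card V)) * (\<Sum>v\<in>V. 2 * real q * exp (\<beta> * Dl) * SW.Dir x))"
    by (intro mult_left_mono sum_mono T) auto
  also have "\<dots> = exp (2 * (\<beta> * Dl)) * SW.Dir x"
    using q1 card_V_pos by (simp add: exp_add[symmetric] field_simps)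
  finally show ?thesis .
qed

end

lemma gap_le1:
  assumes "finite Om"
  shows "spectral_gap Om P \<le> 1"
proof -
  have "{cmod \<xi> | \<xi>. is_eigenvalue Om P \<xi> \<and> \<xi> \<noteq> 1} \<subseteq> cmod ` {\<xi>. is_eigenvalue Om P \<xi>}" by auto
  then have "finite (insert 0 {cmod \<xi> | \<xi>. is_eigenvalue Om P \<xi> \<and> \<xi> \<noteq> 1})"
    using eig_finite[OF assms, of P] finite_subset by blast
  then have "0 \<le> Max (insert 0 {cmod \<xi> | \<xi>. is_eigenvalue Om P \<xi> \<and> \<xi> \<noteq> 1})" by (rule Max_ge) simp
  then show ?thesis unfolding spectral_gap_def by simp
qed

lemma gap_bound:
  assumes fin: "finite Om" and b: "0 \<le> B"
    and h: "\<And>\<xi>. is_eigenvalue Om P \<xi> \<Longrightarrow> \<xi> \<noteq> 1 \<Longrightarrow> cmod \<xi> \<le> B"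
  shows "spectral_gap Om P \<ge> 1 - B"
proof -
  have "{cmod \<xi> | \<xi>. is_eigenvalue Om P \<xi> \<and> \<xi> \<noteq> 1} \<subseteq> cmod ` {\<xi>. is_eigenvalue Om P \<xi>}" by auto
  then have f: "finite (insert 0 {cmod \<xi> | \<xi>. is_eigenvalue Om P \<xi> \<and> \<xi> \<noteq> 1})"
    using eig_finite[OF fin, of P] finite_subset by blast
  have "Max (insert 0 {cmod \<xi> | \<xi>. is_eigenvalue Om P \<xi> \<and> \<xi> \<noteq> 1}) \<le> B"
    using f b h by (subst Max_le_iff) auto
  then show ?thesis unfolding spectral_gap_def by simp
qed

context potts begin

lemma nrm_same: "SW.nrm x = HB.nrm x" unfolding SW.nrm_def HB.nrm_def SW.ip_def HB.ip_def ..
lemma mean_same: "SW.mean x = HB.mean x" unfolding SW.mean_def HB.mean_def ..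

lemma main:
  "spectral_gap Om PSW \<ge> exp (- (2 * (\<beta> * Dl))) * max (spectral_gap Om PHB) 0"
proof -
  define rho where "rho = Max (insert 0 {cmod \<xi> | \<xi>. is_eigenvalue Om PHB \<xi> \<and> \<xi> \<noteq> 1})"
  define lam where "lam = spectral_gap Om PHB"
  define lp where "lp = max lam 0"
  define k where "k = exp (- (2 * (\<beta> * Dl)))"
  have lam: "lam = 1 - rho" unfolding lam_def rho_def spectral_gap_def ..
  have lam1: "lam \<le> 1" unfolding lam_def by (rule gap_le1[OF finOm])
  have lp0: "0 \<le> lp" and lp1: "lp \<le> 1" unfolding lp_def using lam1 by auto
  have k0: "0 \<le> k" and k1: "k \<le> 1" unfolding k_def using bnn by auto
  have ek: "exp (2 * (\<beta> * Dl)) * k = 1" unfolding k_def by (simp add: exp_minus)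
  have HBlow: "HB.Dir a \<ge> lp * HB.nrm a" if ma: "HB.mean a = 0" for a
  proof -
    have "HB.Q a \<le> rho * HB.nrm a" unfolding rho_def by (rule HB.spectral[OF HB_erg ma])
    moreover have "HB.Dir a = HB.nrm a - HB.Q a" using HB.Dir_eq[of a] by simp
    moreover have "lam * HB.nrm a = HB.nrm a - rho * HB.nrm a" unfolding lam by (simp add: left_diff_distrib)
    ultimately have "HB.Dir a \<ge> lam * HB.nrm a" by linarith
    moreover have "HB.Dir a \<ge> 0" by (rule HB.Dir_nonneg)
    moreover have "HB.nrm a \<ge> 0" by (rule HB.nrm_nonneg)
    ultimately have h1: "HB.Dir a \<ge> lam * HB.nrm a" and h2: "HB.Dir a \<ge> 0" by auto
    show ?thesis
    proof (cases "lam \<ge> 0")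
      case True
      then have "lp = lam" unfolding lp_def by simp
      then show ?thesis using h1 by simp
    next
      case False
      then have "lp = 0" unfolding lp_def by simp
      then show ?thesis using h2 by simp
    qed
  qed
  have Qb: "SW.Q a \<le> (1 - k * lp) * SW.nrm a" if ma: "SW.mean a = 0" for a
  proof -
    have "HB.Dir a \<le> exp (2 * (\<beta> * Dl)) * SW.Dir a" by (rule compare)
    then have "k * HB.Dir a \<le> k * (exp (2 * (\<beta> * Dl)) * SW.Dir a)" by (rule mult_left_mono[OF _ k0])
    also have "k * (exp (2 * (\<beta> * Dl)) * SW.Dir a) = (exp (2 * (\<beta> * Dl)) * k) * SW.Dir a" by (simp only: mult_ac)
    also have "\<dots> = SW.Dir a" unfolding ek by simp
    finally have "k * HB.Dir a \<le> SW.Dir a" .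
    moreover have "HB.mean a = 0" using ma mean_same[of a] by simp
    then have "lp * SW.nrm a \<le> HB.Dir a" using HBlow[of a] nrm_same[of a] by simp
    then have "k * (lp * SW.nrm a) \<le> k * HB.Dir a" by (rule mult_left_mono[OF _ k0])
    ultimately have "k * lp * SW.nrm a \<le> SW.Dir a" by (simp add: mult.assoc)
    then show ?thesis using SW.Dir_eq[of a] by (simp add: algebra_simps)
  qed
  have "spectral_gap Om PSW \<ge> 1 - (1 - k * lp)"
  proof (rule gap_bound[OF finOm])
    show "0 \<le> 1 - k * lp" using k0 k1 lp0 lp1 mult_le_one by fastforce
  next
    fix \<xi> assume ev: "is_eigenvalue Om PSW \<xi>" and ne: "\<xi> \<noteq> 1"
    obtain a b where im: "Im \<xi> = 0" and ma: "SW.mean a = 0" and mb: "SW.mean b = 0"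
      and N: "SW.nrm a + SW.nrm b > 0" and re: "Re \<xi> * (SW.nrm a + SW.nrm b) = SW.Q a + SW.Q b"
      by (rule SW.eig_real[OF ev ne])
    have "Re \<xi> * (SW.nrm a + SW.nrm b) \<le> (1 - k * lp) * (SW.nrm a + SW.nrm b)"
      using re Qb[OF ma] Qb[OF mb] by (simp add: algebra_simps)
    then have r1: "Re \<xi> \<le> 1 - k * lp" using N by simp
    have "Re \<xi> * (SW.nrm a + SW.nrm b) \<ge> 0" using re SW_psd[of a] SW_psd[of b] by simp
    then have r0: "Re \<xi> \<ge> 0" using N by (simp add: zero_le_mult_iff)
    have "\<xi> = complex_of_real (Re \<xi>)" using im by (simp add: complex_eq_iff)
    then have "cmod \<xi> = \<bar>Re \<xi>\<bar>" by (metis norm_of_real)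
    then show "cmod \<xi> \<le> 1 - k * lp" using r0 r1 by simp
  qed
  then show ?thesis unfolding k_def lp_def lam_def by simp
qed

end

theorem theorem3p1:
  fixes V :: "'v set" and E :: "'e set" and ends :: "'e \<Rightarrow> 'v set"
    and q :: nat and \<beta> :: real
  assumes "graph V E ends" and "\<beta> \<ge> 0"
  shows "spectral_gap (potts_states V q) (P_SW V E ends q \<beta>) \<ge>
    inverse (real q) * inverse ((real q * exp (2 * \<beta>)) ^ (2 * max_deg V E ends))
      * spectral_gap (potts_states V q) (P_HB V E ends q \<beta>)"
proof -
  define c where "c = inverse (real q) * inverse ((real q * exp (2 * \<beta>)) ^ (2 * max_deg V E ends))"
  define D where "D = max_deg V E ends"
  have fV: "finite V" using assms(1) unfolding graph_def by simp
  have finOm: "finite (potts_states V q)" unfolding potts_states_def using fV by (simp add: finite_PiE)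
  have gHB: "spectral_gap (potts_states V q) (P_HB V E ends q \<beta>) \<le> 1" by (rule gap_le1[OF finOm])
  have c0: "0 \<le> c" unfolding c_def by simp
  have c1: "c \<le> exp (- (2 * (\<beta> * D)))"
  proof (cases "q = 0")
    case True then show ?thesis unfolding c_def by simp
  next
    case False
    then have q1: "real q \<ge> 1" by simp
    have "exp (2 * (\<beta> * D)) \<le> exp (2 * \<beta>) ^ (2 * D)"
      using assms(2) by (simp add: exp_of_nat_mult[symmetric] mult_ac)
    also have "exp (2 * \<beta>) ^ (2 * D) \<le> (real q * exp (2 * \<beta>)) ^ (2 * D)"
      using q1 by (intro power_mono) auto
    finally have le: "exp (2 * (\<beta> * D)) \<le> (real q * exp (2 * \<beta>)) ^ (2 * D)" .
    have "inverse ((real q * exp (2 * \<beta>)) ^ (2 * D)) \<le> inverse (exp (2 * (\<beta> * D)))"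
      by (rule le_imp_inverse_le[OF le]) simp
    also have "\<dots> = exp (- (2 * (\<beta> * D)))" by (simp add: exp_minus)
    finally have i2: "inverse ((real q * exp (2 * \<beta>)) ^ (2 * D)) \<le> exp (- (2 * (\<beta> * D)))" .
    have i1: "inverse (real q) \<le> 1" using le_imp_inverse_le[OF q1] by simp
    have "c \<le> 1 * exp (- (2 * (\<beta> * D)))" unfolding c_def D_def[symmetric]
      by (rule mult_mono[OF i1 i2]) auto
    then show ?thesis by simp
  qed
  have c1': "c \<le> 1" using c1 assms(2) order_trans by fastforce
  have triv: "spectral_gap (potts_states V q) (P_SW V E ends q \<beta>) = 1"
    if "\<And>\<xi>. is_eigenvalue (potts_states V q) (P_SW V E ends q \<beta>) \<xi> \<Longrightarrow> \<xi> = 1"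
  proof -
    have E0: "{cmod \<xi> | \<xi>. is_eigenvalue (potts_states V q) (P_SW V E ends q \<beta>) \<xi> \<and> \<xi> \<noteq> 1} = {}"
      using that by blast
    show ?thesis unfolding spectral_gap_def E0 by simp
  qed
  have trivc: "c * spectral_gap (potts_states V q) (P_HB V E ends q \<beta>) \<le> 1"
  proof (cases "spectral_gap (potts_states V q) (P_HB V E ends q \<beta>) \<ge> 0")
    case True then show ?thesis using gHB c0 c1' mult_le_one by blast
  next
    case False then show ?thesis using c0 by (simp add: mult_nonneg_nonpos order_trans[of _ 0 1])
  qed
  show ?thesis unfolding c_def[symmetric]
  proof (cases "V = {} \<or> q = 0")
    case True
    have "\<xi> = 1" if ev: "is_eigenvalue (potts_states V q) (P_SW V E ends q \<beta>) \<xi>" for \<xi>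
    proof (cases "V = {}")
      case Vemp: True
      have Eemp: "E = {}"
      proof (rule ccontr)
        assume "E \<noteq> {}"
        then obtain e where e: "e \<in> E" by blast
        then have "ends e \<subseteq> V" "1 \<le> card (ends e)" using assms(1) unfolding graph_def by auto
        then show False using Vemp by simp
      qed
      have Om: "potts_states V q = {\<lambda>_. undefined}" unfolding potts_states_def Vemp by simp
      have P1: "P_SW V E ends q \<beta> (\<lambda>_. undefined) (\<lambda>_. undefined) = 1"
        unfolding P_SW_def Let_def Eemp Vemp mono_edges_def ncomp_def by simp
      obtain f where f0: "\<exists>\<sigma>\<in>potts_states V q. f \<sigma> \<noteq> 0"
        and fe: "\<forall>\<sigma>\<in>potts_states V q. (\<Sum>\<tau>\<in>potts_states V q. complex_of_real (P_SW V E ends q \<beta> \<sigma> \<tau>) * f \<tau>) = \<xi> * f \<sigma>"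
        using ev unfolding is_eigenvalue_def by blast
      have a: "f (\<lambda>_. undefined) \<noteq> 0" using f0 unfolding Om by simp
      have b: "complex_of_real (P_SW V E ends q \<beta> (\<lambda>_. undefined) (\<lambda>_. undefined)) * f (\<lambda>_. undefined) = \<xi> * f (\<lambda>_. undefined)"
        using fe unfolding Om by simp
      then show ?thesis using a P1 by simp
    next
      case False
      then have "q = 0" using True by simp
      then have "potts_states V q = {}" unfolding potts_states_def using False by auto
      then show ?thesis using ev unfolding is_eigenvalue_def by simp
    qed
    then have "spectral_gap (potts_states V q) (P_SW V E ends q \<beta>) = 1" by (rule triv)
    then show "c * spectral_gap (potts_states V q) (P_HB V E ends q \<beta>) \<le> spectral_gap (potts_states V q) (P_SW V E ends q \<beta>)"
      using trivc by simp
  next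
    case False
    then have Vne: "V \<noteq> {}" and q1: "q \<ge> 1" by auto
    interpret potts V E ends q \<beta> using assms Vne q1 by unfold_locales auto
    have m: "spectral_gap Om PSW \<ge> exp (- (2 * (\<beta> * D))) * max (spectral_gap Om PHB) 0"
      using main unfolding Dl_def D_def .
    have "c * spectral_gap Om PHB \<le> c * max (spectral_gap Om PHB) 0" using c0 by (simp add: mult_left_mono)
    also have "\<dots> \<le> exp (- (2 * (\<beta> * D))) * max (spectral_gap Om PHB) 0"
      using c1 by (intro mult_right_mono) auto
    finally show "c * spectral_gap Om PHB \<le> spectral_gap Om PSW" using m by simp
  qed
qed

end
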